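(* Suppose $d=3$ and let $\Pi\subseteq\Sigma$. The cones $\sigma^1_\Pi$ and $\sigma^2_\Pi$ intersect nontrivially (i.e. $\sigma^1_\Pi\cap\sigma^2_\Pi\ne\{0\}$) if and only if $\Pi$ consists of more than one interval. In that case $\sigma_\Pi=N_\mathbb{R}$.
   Context: $N\cong\mathbb{Z}^3$, $\sigma\subset N_\mathbb{R}$ a strongly convex rational polyhedral cone of dimension $3$, $\Sigma=\sigma(1)$ its set of rays with primitive generators $n(\rho)$. The rays carry a cyclic order in which two rays are adjacent iff they span a $2$-dimensional face of $\sigma$ (equivalently, the cyclic order of the vertices $\rho\cap H$ of the polygon $\sigma\cap H$ for an affine hyperplane $H$ meeting $\sigma$ in a bounded polygon). "$\Pi$ consists of more than one interval" means that $\Pi$, viewed as a set of vertices of this cycle, decomposes into more than one maximal block of cyclically consecutive rays. $\sigma^1_\Pi=\operatorname{cone}(n(\rho):\rho\in\Pi)$, $\sigma^2_\Pi=\operatorname{cone}(n(\rho):\rho\in\Sigma\setminus\Pi)$, and $\sigma_\Pi=\operatorname{cone}(-n(\rho):\rho\in\Pi;\ n(\rho):\rho\in\Sigma\setminus\Pi)$, all cones over $\mathbb{R}_{\ge0}$. *)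

theory Defs
  imports "HOL-Analysis.Analysis"
begin

definition lattice_pt :: "real^3 \<Rightarrow> bool" where
  "lattice_pt x \<longleftrightarrow> (\<forall>i. x $ i \<in> \<int>)"

text \<open>cone(S) over R_{>=0}: all finite nonnegative combinations (cone of the empty set is {0}).\<close>
definition pos_cone :: "(real^3) set \<Rightarrow> (real^3) set" where
  "pos_cone S = {x. \<exists>T c. finite T \<and> T \<subseteq> S \<and> (\<forall>v\<in>T. 0 \<le> c v) \<and> x = (\<Sum>v\<in>T. c v *\<^sub>R v)}"

definition full_sc_rat_poly_cone :: "(real^3) set \<Rightarrow> bool" where
  "full_sc_rat_poly_cone \<sigma> \<longleftrightarrow>
     (\<exists>S. finite S \<and> (\<forall>v\<in>S. lattice_pt v) \<and> \<sigma> = pos_cone S)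
     \<and> \<sigma> \<inter> uminus ` \<sigma> = {0}
     \<and> aff_dim \<sigma> = 3"

definition rays :: "(real^3) set \<Rightarrow> (real^3) set set" where
  "rays \<sigma> = {\<rho>. \<rho> face_of \<sigma> \<and> aff_dim \<rho> = 1}"

definition prim_gen :: "(real^3) set \<Rightarrow> real^3" where
  "prim_gen \<rho> = (THE v. v \<in> \<rho> \<and> lattice_pt v \<and> v \<noteq> 0 \<and>
      (\<forall>w\<in>\<rho>. lattice_pt w \<and> w \<noteq> 0 \<longrightarrow> (\<exists>k::nat. w = real k *\<^sub>R v)))"

definition adjacent_rays :: "(real^3) set \<Rightarrow> (real^3) set \<Rightarrow> (real^3) set \<Rightarrow> bool" where
  "adjacent_rays \<sigma> \<rho> \<rho>' \<longleftrightarrow> \<rho> \<in> rays \<sigma> \<and> \<rho>' \<in> rays \<sigma> \<and> \<rho> \<noteq> \<rho>' \<and>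
     pos_cone (\<rho> \<union> \<rho>') face_of \<sigma> \<and> aff_dim (pos_cone (\<rho> \<union> \<rho>')) = 2"

text \<open>Pi consists of more than one interval: the subgraph of the cycle of rays induced
  on Pi has more than one connected component (maximal block of consecutive rays).\<close>
definition more_than_one_interval :: "(real^3) set \<Rightarrow> (real^3) set set \<Rightarrow> bool" where
  "more_than_one_interval \<sigma> P \<longleftrightarrow>
     (\<exists>a\<in>P. \<exists>b\<in>P. (a, b) \<notin> {(x, y). x \<in> P \<and> y \<in> P \<and> adjacent_rays \<sigma> x y}\<^sup>*)"

definition sigma1 :: "(real^3) set \<Rightarrow> (real^3) set set \<Rightarrow> (real^3) set" where
  "sigma1 \<sigma> P = pos_cone (prim_gen ` P)"

definition sigma2 :: "(real^3) set \<Rightarrow> (real^3) set set \<Rightarrow> (real^3) set" where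
  "sigma2 \<sigma> P = pos_cone (prim_gen ` (rays \<sigma> - P))"

definition sigmaPi :: "(real^3) set \<Rightarrow> (real^3) set set \<Rightarrow> (real^3) set" where
  "sigmaPi \<sigma> P = pos_cone ((\<lambda>\<rho>. - prim_gen \<rho>) ` P \<union> prim_gen ` (rays \<sigma> - P))"

end

theory Submission
  imports Defs
begin

definition det3 :: "real^3 \<Rightarrow> real^3 \<Rightarrow> real^3 \<Rightarrow> real" where
  "det3 a b c = inner (cross3 a b) c"

lemma det3_expand: "det3 a b c = a$1*(b$2*c$3 - b$3*c$2) - a$2*(b$1*c$3 - b$3*c$1) + a$3*(b$1*c$2 - b$2*c$1)"
  by (simp add: det3_def cross3_def inner_vec_def sum_3 vector_def algebra_simps)

lemma det3_swap12: "det3 b a c = - det3 a b c" by (simp add: det3_expand algebra_simps)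
lemma det3_swap23: "det3 a c b = - det3 a b c" by (simp add: det3_expand algebra_simps)
lemma det3_cyc: "det3 b c a = det3 a b c" by (simp add: det3_expand algebra_simps)
lemma det3_rep: "det3 a a c = 0" "det3 a b b = 0" "det3 a b a = 0" by (simp_all add: det3_expand algebra_simps)

lemma det3_add3: "det3 a b (x + y) = det3 a b x + det3 a b y" by (simp add: det3_def inner_add_right)
lemma det3_scale3: "det3 a b (t *\<^sub>R x) = t * det3 a b x" by (simp add: det3_def)
lemma det3_sum3: "det3 a b (\<Sum>i\<in>I. f i) = (\<Sum>i\<in>I. det3 a b (f i))" by (simp add: det3_def inner_sum_right)
lemma det3_minus3: "det3 a b (- x) = - det3 a b x" by (simp add: det3_def)

lemma four_vec: "det3 b c d *\<^sub>R a - det3 a c d *\<^sub>R b + det3 a b d *\<^sub>R c - det3 a b c *\<^sub>R d = 0"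
  by (simp add: det3_expand vec_eq_iff forall_3 algebra_simps)

lemma cramer: "det3 a b c *\<^sub>R y = det3 y b c *\<^sub>R a + det3 a y c *\<^sub>R b + det3 a b y *\<^sub>R c"
  by (simp add: det3_expand vec_eq_iff forall_3 algebra_simps)

lemma pc_fin:
  assumes "finite T"
  shows "pos_cone T = {x. \<exists>c. (\<forall>v\<in>T. 0 \<le> c v) \<and> x = (\<Sum>v\<in>T. c v *\<^sub>R v)}"
proof (rule set_eqI, rule iffI)
  fix x assume "x \<in> pos_cone T"
  then obtain T' c where T': "finite T'" "T' \<subseteq> T" "\<forall>v\<in>T'. 0 \<le> c v" "x = (\<Sum>v\<in>T'. c v *\<^sub>R v)"
    unfolding pos_cone_def by blast
  define c' where "c' v = (if v \<in> T' then c v else 0)" for v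
  have "(\<Sum>v\<in>T. c' v *\<^sub>R v) = (\<Sum>v\<in>T'. c' v *\<^sub>R v)"
    by (rule sum.mono_neutral_right) (use assms T' in \<open>auto simp: c'_def\<close>)
  also have "\<dots> = x" using T' by (simp add: c'_def)
  finally show "x \<in> {x. \<exists>c. (\<forall>v\<in>T. 0 \<le> c v) \<and> x = (\<Sum>v\<in>T. c v *\<^sub>R v)}"
    using T' by (auto simp: c'_def intro!: exI[of _ c'])
next
  fix x assume "x \<in> {x. \<exists>c. (\<forall>v\<in>T. 0 \<le> c v) \<and> x = (\<Sum>v\<in>T. c v *\<^sub>R v)}"
  then show "x \<in> pos_cone T" using assms unfolding pos_cone_def by blast
qed

lemma pc_0: "0 \<in> pos_cone T"
  unfolding pos_cone_def by (rule CollectI, rule exI[of _ "{}"]) auto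

lemma pc_gen: "v \<in> T \<Longrightarrow> v \<in> pos_cone T"
  unfolding pos_cone_def by (rule CollectI, rule exI[of _ "{v}"], rule exI[of _ "\<lambda>_. 1"]) auto

lemma pc_mono: "T \<subseteq> U \<Longrightarrow> pos_cone T \<subseteq> pos_cone U"
  unfolding pos_cone_def by blast

lemma pc_scale: assumes "x \<in> pos_cone T" "0 \<le> t" shows "t *\<^sub>R x \<in> pos_cone T"
proof -
  obtain T' c where T': "finite T'" "T' \<subseteq> T" "\<forall>v\<in>T'. 0 \<le> c v" "x = (\<Sum>v\<in>T'. c v *\<^sub>R v)"
    using assms unfolding pos_cone_def by blast
  have "t *\<^sub>R x = (\<Sum>v\<in>T'. (t * c v) *\<^sub>R v)" using T' by (simp add: scaleR_sum_right)
  then show ?thesis using T' assms unfolding pos_cone_def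
    by (intro CollectI exI[of _ T'] exI[of _ "\<lambda>v. t * c v"]) auto
qed

lemma pc_add: assumes "x \<in> pos_cone T" "y \<in> pos_cone T" shows "x + y \<in> pos_cone T"
proof -
  obtain T1 c1 where T1: "finite T1" "T1 \<subseteq> T" "\<forall>v\<in>T1. 0 \<le> c1 v" "x = (\<Sum>v\<in>T1. c1 v *\<^sub>R v)"
    using assms unfolding pos_cone_def by blast
  obtain T2 c2 where T2: "finite T2" "T2 \<subseteq> T" "\<forall>v\<in>T2. 0 \<le> c2 v" "y = (\<Sum>v\<in>T2. c2 v *\<^sub>R v)"
    using assms unfolding pos_cone_def by blast
  define U where "U = T1 \<union> T2"
  define c where "c v = (if v \<in> T1 then c1 v else 0) + (if v \<in> T2 then c2 v else 0)" for v
  have fU: "finite U" using T1 T2 by (simp add: U_def)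
  have ex: "x = (\<Sum>v\<in>U. (if v \<in> T1 then c1 v else 0) *\<^sub>R v)"
    unfolding T1(4) by (rule sum.mono_neutral_cong_left) (use fU in \<open>auto simp: U_def\<close>)
  have ey: "y = (\<Sum>v\<in>U. (if v \<in> T2 then c2 v else 0) *\<^sub>R v)"
    unfolding T2(4) by (rule sum.mono_neutral_cong_left) (use fU in \<open>auto simp: U_def\<close>)
  have "x + y = (\<Sum>v\<in>U. c v *\<^sub>R v)"
    unfolding ex ey c_def by (simp add: sum.distrib[symmetric] scaleR_add_left)
  moreover have "U \<subseteq> T" "\<forall>v\<in>U. 0 \<le> c v" using T1 T2 by (auto simp: U_def c_def)
  ultimately show ?thesis using fU unfolding pos_cone_def by blast
qed

lemma pc_sum: "finite I \<Longrightarrow> (\<And>i. i \<in> I \<Longrightarrow> f i \<in> pos_cone T) \<Longrightarrow> (\<Sum>i\<in>I. f i) \<in> pos_cone T"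
  by (induction I rule: finite_induct) (auto intro: pc_0 pc_add)

lemma pc_comb: "finite I \<Longrightarrow> (\<And>i. i \<in> I \<Longrightarrow> f i \<in> pos_cone T) \<Longrightarrow> (\<And>i. i \<in> I \<Longrightarrow> 0 \<le> c i)
   \<Longrightarrow> (\<Sum>i\<in>I. c i *\<^sub>R f i) \<in> pos_cone T"
  by (rule pc_sum) (auto intro: pc_scale)

lemma pc_sub: assumes "T \<subseteq> pos_cone U" shows "pos_cone T \<subseteq> pos_cone U"
proof
  fix x assume "x \<in> pos_cone T"
  then obtain T' c where T': "finite T'" "T' \<subseteq> T" "\<forall>v\<in>T'. 0 \<le> c v" "x = (\<Sum>v\<in>T'. c v *\<^sub>R v)"
    unfolding pos_cone_def by blast
  show "x \<in> pos_cone U" unfolding T'(4) using T' assms by (intro pc_comb) auto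
qed

lemma pc_image:
  assumes "finite R" "inj_on g R"
  shows "x \<in> pos_cone (g ` R) \<longleftrightarrow> (\<exists>c. (\<forall>r\<in>R. 0 \<le> c r) \<and> x = (\<Sum>r\<in>R. c r *\<^sub>R g r))"
proof
  assume "x \<in> pos_cone (g ` R)"
  then obtain c where c: "\<forall>v\<in>g`R. 0 \<le> c v" "x = (\<Sum>v\<in>g`R. c v *\<^sub>R v)"
    using pc_fin[of "g ` R"] assms by auto
  have "x = (\<Sum>r\<in>R. c (g r) *\<^sub>R g r)" using c(2) sum.reindex[OF assms(2)] by (simp add: o_def)
  then show "\<exists>c. (\<forall>r\<in>R. 0 \<le> c r) \<and> x = (\<Sum>r\<in>R. c r *\<^sub>R g r)" using c(1) by (intro exI[of _ "c o g"]) auto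
next
  assume "\<exists>c. (\<forall>r\<in>R. 0 \<le> c r) \<and> x = (\<Sum>r\<in>R. c r *\<^sub>R g r)"
  then obtain c where c: "\<forall>r\<in>R. 0 \<le> c r" "x = (\<Sum>r\<in>R. c r *\<^sub>R g r)" by blast
  show "x \<in> pos_cone (g ` R)" unfolding c(2) using c(1) by (intro pc_comb) (auto intro: pc_gen assms)
qed


locale model =
  fixes R :: "'r set" and g :: "'r \<Rightarrow> real^3"
  assumes fin: "finite R" and inj: "inj_on g R" and nz: "\<And>r. r \<in> R \<Longrightarrow> g r \<noteq> 0"
    and pointed: "\<And>x. x \<in> pos_cone (g`R) \<Longrightarrow> -x \<in> pos_cone (g`R) \<Longrightarrow> x = 0"
    and extremal: "\<And>r. r \<in> R \<Longrightarrow> g r \<notin> pos_cone (g ` (R - {r}))"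
begin

abbreviation "\<sigma> \<equiv> pos_cone (g`R)"

lemma gin: "r \<in> R \<Longrightarrow> g r \<in> \<sigma>" by (rule pc_gen) auto

lemma gin': "r \<in> A \<Longrightarrow> g r \<in> pos_cone (g`A)" by (rule pc_gen) auto

lemma sgin: "r \<in> A \<Longrightarrow> 0 \<le> t \<Longrightarrow> t *\<^sub>R g r \<in> pos_cone (g`A)" by (intro pc_scale gin')

lemma pointed_pos: assumes "r \<in> R" "0 < t" "y \<in> \<sigma>" "t *\<^sub>R g r + y = 0" shows False
proof -
  have "t *\<^sub>R g r \<in> \<sigma>" using assms by (intro sgin) auto
  moreover have "- (t *\<^sub>R g r) = y" using assms(4) by (simp add: add_eq_0_iff)
  ultimately have "t *\<^sub>R g r = 0" using pointed[of "t *\<^sub>R g r"] assms(3) by simp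
  then show False using assms nz by auto
qed

lemma ext_gen: assumes "r \<in> R" "0 < t" "x \<in> pos_cone (g`(R-{r}))" "t *\<^sub>R g r = x" shows False
proof -
  have "g r = (1/t) *\<^sub>R x" using assms by auto
  also have "\<dots> \<in> pos_cone (g`(R-{r}))" using assms by (intro pc_scale) auto
  finally show False using extremal assms by auto
qed

lemma lin1: assumes "r \<in> R" "r1 \<in> R" "r \<noteq> r1" "0 < t" "t *\<^sub>R g r = p *\<^sub>R g r1" shows False
proof (cases "p \<ge> 0")
  case True
  then show False using assms by (intro ext_gen[of r t "p *\<^sub>R g r1"] sgin) auto
next
  case False
  then show False using assms
    by (intro pointed_pos[of r t "(-p) *\<^sub>R g r1"] sgin) auto
qed

lemma lin2: assumes "r \<in> R" "r1 \<in> R" "r2 \<in> R" "r \<noteq> r1" "r \<noteq> r2" "r1 \<noteq> r2" "0 < t"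
  "t *\<^sub>R g r = p *\<^sub>R g r1 + q *\<^sub>R g r2" shows False
proof -
  consider "p \<ge> 0" "q \<ge> 0" | "p < 0" "q \<ge> 0" | "p \<ge> 0" "q < 0" | "p < 0" "q < 0" by linarith
  then show False
  proof cases
    case 1 then show False using assms by (intro ext_gen[of r t "p *\<^sub>R g r1 + q *\<^sub>R g r2"] pc_add sgin) auto
  next
    case 2
    show False
    proof (cases "q = 0")
      case True
      then show False using assms 2 by (intro pointed_pos[of r t "(-p) *\<^sub>R g r1"] sgin) auto
    next
      case False
      then have "q *\<^sub>R g r2 = t *\<^sub>R g r + (-p) *\<^sub>R g r1" using assms by (simp add: algebra_simps)
      then show False using assms 2 False
        by (intro ext_gen[of r2 q "t *\<^sub>R g r + (-p) *\<^sub>R g r1"] pc_add sgin) auto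
    qed
  next
    case 3
    show False
    proof (cases "p = 0")
      case True
      then show False using assms 3 by (intro pointed_pos[of r t "(-q) *\<^sub>R g r2"] sgin) auto
    next
      case False
      then have "p *\<^sub>R g r1 = t *\<^sub>R g r + (-q) *\<^sub>R g r2" using assms by (simp add: algebra_simps)
      then show False using assms 3 False
        by (intro ext_gen[of r1 p "t *\<^sub>R g r + (-q) *\<^sub>R g r2"] pc_add sgin) auto
    qed
  next
    case 4
    then show False using assms
      by (intro pointed_pos[of r t "(-p) *\<^sub>R g r1 + (-q) *\<^sub>R g r2"] pc_add sgin) (auto simp: algebra_simps)
  qed
qed

lemma nonpar: assumes "r1 \<in> R" "r2 \<in> R" "r1 \<noteq> r2" shows "cross3 (g r1) (g r2) \<noteq> 0"
proof
  assume c: "cross3 (g r1) (g r2) = 0"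
  have "cross3 (g r1) (cross3 (g r1) (g r2)) = (g r1 \<bullet> g r2) *\<^sub>R g r1 - (g r1 \<bullet> g r1) *\<^sub>R g r2"
    by (rule Lagrange)
  then have "(g r1 \<bullet> g r1) *\<^sub>R g r2 = (g r1 \<bullet> g r2) *\<^sub>R g r1" using c by simp
  moreover have "g r1 \<bullet> g r1 > 0" using nz assms by auto
  ultimately show False using lin1[of r2 r1 "g r1 \<bullet> g r1" "g r1 \<bullet> g r2"] assms by blast
qed

lemma ncp: assumes "r1 \<in> R" "r2 \<in> R" "r3 \<in> R" "r1 \<noteq> r2" "r1 \<noteq> r3" "r2 \<noteq> r3"
  shows "det3 (g r1) (g r2) (g r3) \<noteq> 0"
proof
  assume d: "det3 (g r1) (g r2) (g r3) = 0"
  define n where "n = cross3 (g r1) (g r2)"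
  have n0: "n \<noteq> 0" using nonpar assms by (simp add: n_def)
  have "det3 (g r1) (g r2) n = n \<bullet> n" by (simp add: det3_def n_def)
  then have pos: "det3 (g r1) (g r2) n > 0" using n0 by auto
  have "det3 (g r1) (g r2) n *\<^sub>R g r3 = det3 (g r3) (g r2) n *\<^sub>R g r1 + det3 (g r1) (g r3) n *\<^sub>R g r2"
    using cramer[of "g r1" "g r2" n "g r3"] d by simp
  then show False using lin2[of r3 r1 r2] assms pos by auto
qed

end


context model begin

definition "D r1 r2 r3 = det3 (g r1) (g r2) (g r3)"

lemma D_swap12: "D b a c = - D a b c" and D_swap23: "D a c b = - D a b c" and D_cyc: "D b c a = D a b c"
  unfolding D_def by (rule det3_swap12, rule det3_swap23, rule det3_cyc)

lemma D_rep: "D a a c = 0" "D a b b = 0" "D a b a = 0" by (simp_all add: D_def det3_rep)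

lemma D_ne: "r1 \<in> R \<Longrightarrow> r2 \<in> R \<Longrightarrow> r3 \<in> R \<Longrightarrow> r1 \<noteq> r2 \<Longrightarrow> r1 \<noteq> r3 \<Longrightarrow> r2 \<noteq> r3 \<Longrightarrow> D r1 r2 r3 \<noteq> 0"
  using ncp by (simp add: D_def)

lemma four_D: "D u v w *\<^sub>R g a - D a v w *\<^sub>R g u + D a u w *\<^sub>R g v - D a u v *\<^sub>R g w = 0"
  unfolding D_def by (rule four_vec)

lemma four_D': "D a v w *\<^sub>R g u + D a u v *\<^sub>R g w = D a u w *\<^sub>R g v + D u v w *\<^sub>R g a"
proof -
  have "D a v w *\<^sub>R g u + D a u v *\<^sub>R g w - (D a u w *\<^sub>R g v + D u v w *\<^sub>R g a) = 
     -(D u v w *\<^sub>R g a - D a v w *\<^sub>R g u + D a u w *\<^sub>R g v - D a u v *\<^sub>R g w)"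
    by (simp add: algebra_simps)
  then show ?thesis using four_D[of u v w a] by simp
qed

lemma D_trans: assumes R: "a \<in> R" "u \<in> R" "v \<in> R" "w \<in> R" and ne: "u \<noteq> a" "v \<noteq> a" "w \<noteq> a"
  and p: "D a u v > 0" "D a v w > 0" shows "D a u w > 0"
proof -
  have uv: "u \<noteq> v" using p D_rep by auto
  have vw: "v \<noteq> w" using p D_rep by auto
  have uw: "u \<noteq> w" using p D_swap23[of a u v] by auto
  have nz: "D a u w \<noteq> 0" using D_ne R ne uv vw uw by auto
  show ?thesis
  proof (rule ccontr)
    assume "\<not> ?thesis"
    then have neg: "D a u w < 0" using nz by auto
    define y where "y = D a u v *\<^sub>R g w + (- D a u w) *\<^sub>R g v"
    define x where "x = D a v w *\<^sub>R g u + y"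
    have "x = (D a v w *\<^sub>R g u + D a u v *\<^sub>R g w) - D a u w *\<^sub>R g v"
      unfolding x_def y_def by (simp add: algebra_simps)
    also have "\<dots> = D u v w *\<^sub>R g a" unfolding four_D' by simp
    finally have eq: "x = D u v w *\<^sub>R g a" .
    have yin: "y \<in> pos_cone (g`(R-{a}))" unfolding y_def using R ne p neg
      by (intro pc_add sgin) auto
    have xin: "x \<in> pos_cone (g`(R-{a}))" unfolding x_def using R ne p yin
      by (intro pc_add sgin) auto
    show False
    proof (cases "D u v w > 0")
      case True
      then show False using ext_gen[OF R(1) True xin eq[symmetric]] by blast
    next
      case False
      have z: "D a v w *\<^sub>R g u + (y + (- D u v w) *\<^sub>R g a) = x - D u v w *\<^sub>R g a"
        unfolding x_def by (simp add: algebra_simps)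
      then have z: "D a v w *\<^sub>R g u + (y + (- D u v w) *\<^sub>R g a) = 0" unfolding eq by simp
      have "y \<in> \<sigma>" using yin pc_mono[of "g`(R-{a})" "g`R"] by auto
      then have "y + (- D u v w) *\<^sub>R g a \<in> \<sigma>" using False R by (intro pc_add sgin) auto
      then show False using pointed_pos[OF R(2) p(2) _ z] by blast
    qed
  qed
qed

lemma D_T: assumes R: "a \<in> R" "u \<in> R" "v \<in> R" "w \<in> R" and ne: "u \<noteq> a" "v \<noteq> a" "w \<noteq> a"
  and p: "D a u v > 0" "D a v w > 0" shows "D u v w > 0"
proof -
  have uv: "u \<noteq> v" using p D_rep by auto
  have vw: "v \<noteq> w" using p D_rep by auto
  have uw: "u \<noteq> w" using p D_swap23[of a u v] by auto
  have p3: "D a u w > 0" using D_trans assms by blast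
  have nz: "D u v w \<noteq> 0" using D_ne R ne uv vw uw by auto
  show ?thesis
  proof (rule ccontr)
    assume "\<not> ?thesis"
    then have neg: "D u v w < 0" using nz by auto
    define x where "x = D a v w *\<^sub>R g u + (D a u v *\<^sub>R g w + (- D u v w) *\<^sub>R g a)"
    have "x = (D a v w *\<^sub>R g u + D a u v *\<^sub>R g w) - D u v w *\<^sub>R g a"
      unfolding x_def by (simp add: algebra_simps)
    also have "\<dots> = D a u w *\<^sub>R g v" unfolding four_D' by simp
    finally have eq: "D a u w *\<^sub>R g v = x" by simp
    have "x \<in> pos_cone (g`(R-{v}))" unfolding x_def using R ne p neg uv vw 
      by (intro pc_add sgin) auto
    then show False using ext_gen[OF R(3) p3 _ eq] by blast
  qed
qed

end

locale model0 = model R g for R :: "'r set" and g +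
  fixes r0 assumes r0: "r0 \<in> R"
begin

definition "rk r = card {u \<in> R - {r0}. D r0 u r > 0}"
definition "idx r = (if r = r0 then 0 else Suc (rk r))"
definition "e i = the_inv_into R idx i"
abbreviation "n \<equiv> card R"

lemma rk_less: assumes "u \<in> R - {r0}" "v \<in> R - {r0}" "D r0 u v > 0" shows "rk u < rk v"
proof -
  have "{w \<in> R - {r0}. D r0 w u > 0} \<subset> {w \<in> R - {r0}. D r0 w v > 0}"
  proof
    show "{w \<in> R - {r0}. D r0 w u > 0} \<subseteq> {w \<in> R - {r0}. D r0 w v > 0}"
    proof
      fix w assume "w \<in> {w \<in> R - {r0}. D r0 w u > 0}"
      then have w: "w \<in> R" "w \<noteq> r0" "D r0 w u > 0" by auto
      have "D r0 w v > 0" using D_trans[OF r0 w(1) _ _ w(2) _ _ w(3) assms(3)] assms by blast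
      then show "w \<in> {w \<in> R - {r0}. D r0 w v > 0}" using w by blast
    qed
    have "u \<in> {w \<in> R - {r0}. D r0 w v > 0}" using assms by blast
    moreover have "u \<notin> {w \<in> R - {r0}. D r0 w u > 0}" using D_rep(2)[of r0 u] by simp
    ultimately show "{w \<in> R - {r0}. D r0 w u > 0} \<noteq> {w \<in> R - {r0}. D r0 w v > 0}" by blast
  qed
  then show ?thesis unfolding rk_def by (intro psubset_card_mono) (use fin in auto)
qed

lemma idx_lt: assumes "u \<in> R - {r0}" "v \<in> R - {r0}" shows "idx u < idx v \<longleftrightarrow> D r0 u v > 0"
proof
  assume "D r0 u v > 0" then show "idx u < idx v" using rk_less assms by (auto simp: idx_def)
next
  assume a: "idx u < idx v"
  show "D r0 u v > 0"
  proof (rule ccontr)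
    assume "\<not> D r0 u v > 0"
    moreover have "u \<noteq> v" using a by auto
    ultimately have "D r0 v u > 0" using D_ne[of r0 u v] D_swap23[of r0 u v] assms r0 by force
    then show False using rk_less[of v u] assms a by (auto simp: idx_def)
  qed
qed

lemma idx_inj: "inj_on idx R"
proof
  fix u v assume uv: "u \<in> R" "v \<in> R" "idx u = idx v"
  show "u = v"
  proof (rule ccontr)
    assume ne: "u \<noteq> v"
    show False
    proof (cases "u = r0 \<or> v = r0")
      case True then show False using uv ne by (auto simp: idx_def)
    next
      case False
      then have "D r0 u v \<noteq> 0" using D_ne[of r0 u v] uv ne r0 by auto
      then have "D r0 u v > 0 \<or> D r0 v u > 0" using D_swap23[of r0 u v] by linarith
      then show False using idx_lt[of u v] idx_lt[of v u] uv False by auto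
    qed
  qed
qed

lemma idx_range: assumes "r \<in> R" shows "idx r < n"
proof (cases "r = r0")
  case True then show ?thesis using assms fin by (auto simp: idx_def card_gt_0_iff)
next
  case False
  have rr: "r \<in> R - {r0}" using assms False by blast
  have "r \<notin> {u \<in> R - {r0}. D r0 u r > 0}" using D_rep(2)[of r0 r] by simp
  then have "{u \<in> R - {r0}. D r0 u r > 0} \<subset> R - {r0}" using rr by blast
  then have "rk r < card (R - {r0})" unfolding rk_def by (intro psubset_card_mono) (use fin in auto)
  also have "\<dots> = n - 1" using r0 fin by simp
  finally show ?thesis using False by (auto simp: idx_def)
qed

lemma idx_bij: "bij_betw idx R {..<n}"
proof -
  have "idx ` R \<subseteq> {..<n}" using idx_range by auto
  moreover have "card (idx ` R) = n" using card_image[OF idx_inj] .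
  ultimately have "idx ` R = {..<n}" by (intro card_subset_eq) auto
  then show ?thesis using idx_inj by (simp add: bij_betw_def)
qed

lemma e_in: "i < n \<Longrightarrow> e i \<in> R"
  using idx_bij unfolding e_def by (metis bij_betw_def lessThan_iff the_inv_into_into subset_refl)

lemma idx_e: "i < n \<Longrightarrow> idx (e i) = i"
  using idx_bij unfolding e_def by (metis bij_betw_def lessThan_iff f_the_inv_into_f)

lemma e_idx: "r \<in> R \<Longrightarrow> e (idx r) = r"
  using idx_inj unfolding e_def by (simp add: the_inv_into_f_f)

lemma idx_r0: "idx r0 = 0" by (simp add: idx_def)
lemma e0: "e 0 = r0" using e_idx[OF r0] idx_r0 by simp

lemma idx_0: "r \<in> R \<Longrightarrow> idx r = 0 \<longleftrightarrow> r = r0" by (simp add: idx_def)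

lemma e_inj: "i < n \<Longrightarrow> j < n \<Longrightarrow> e i = e j \<longleftrightarrow> i = j"
  by (metis idx_e)

lemma pos3: assumes "i < j" "j < k" "k < n" shows "D (e i) (e j) (e k) > 0"
proof -
  have ej: "e j \<in> R - {r0}" "e k \<in> R - {r0}" using assms e_in idx_e idx_0 by (metis Diff_iff less_trans not_less_zero singletonD)+
  have jk: "D r0 (e j) (e k) > 0" using idx_lt[OF ej] assms idx_e by auto
  show ?thesis
  proof (cases "i = 0")
    case True then show ?thesis using jk e0 by simp
  next
    case False
    have ei: "e i \<in> R - {r0}" using assms e_in idx_e idx_0 False by (metis Diff_iff less_trans singletonD)
    have ij: "D r0 (e i) (e j) > 0" using idx_lt[OF ei ej(1)] assms idx_e by auto
    show ?thesis using D_T[of r0 "e i" "e j" "e k"] r0 ei ej ij jk by auto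
  qed
qed

end

context model begin
definition "adjD r s \<longleftrightarrow> (\<forall>v\<in>R-{r,s}. D r s v > 0) \<or> (\<forall>v\<in>R-{r,s}. D r s v < 0)"

lemma adjD_sym: "adjD r s \<longleftrightarrow> adjD s r"
  unfolding adjD_def using D_swap12[of s r] by (auto simp: insert_commute)

definition "adj x y \<longleftrightarrow> x \<in> R \<and> y \<in> R \<and> x \<noteq> y \<and> adjD x y"

lemma adj_sym: "adj x y \<longleftrightarrow> adj y x" unfolding adj_def using adjD_sym by blast
end

context model0 begin

lemma sign_out: assumes "i < j" "j < n" "m < n" "m < i \<or> j < m" shows "D (e i) (e j) (e m) > 0"
proof (cases "m < i")
  case True
  then have "D (e m) (e i) (e j) > 0" using pos3 assms by auto
  then show ?thesis using D_cyc[of "e i" "e j" "e m"] by simp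
next
  case False
  then show ?thesis using pos3 assms by auto
qed

lemma sign_in: assumes "i < m" "m < j" "j < n" shows "D (e i) (e j) (e m) < 0"
  using pos3[OF assms] D_swap23[of "e i" "e m" "e j"] by simp

lemma all_R: "(\<forall>v\<in>R-{e i, e j}. P v) \<longleftrightarrow> (\<forall>m<n. m \<noteq> i \<longrightarrow> m \<noteq> j \<longrightarrow> P (e m))"
  if "i < n" "j < n"
proof
  assume a: "\<forall>v\<in>R-{e i, e j}. P v"
  show "\<forall>m<n. m \<noteq> i \<longrightarrow> m \<noteq> j \<longrightarrow> P (e m)"
  proof (intro allI impI)
    fix m assume m: "m < n" "m \<noteq> i" "m \<noteq> j"
    then have "e m \<in> R - {e i, e j}" using e_in e_inj that by auto
    then show "P (e m)" using a by blast
  qed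
next
  assume a: "\<forall>m<n. m \<noteq> i \<longrightarrow> m \<noteq> j \<longrightarrow> P (e m)"
  show "\<forall>v\<in>R-{e i, e j}. P v"
  proof
    fix v assume v: "v \<in> R - {e i, e j}"
    then have "idx v < n" "idx v \<noteq> i" "idx v \<noteq> j" using idx_range e_idx by auto
    then have "P (e (idx v))" using a by blast
    then show "P v" using v e_idx by auto
  qed
qed

lemma adj_idx: assumes "i < j" "j < n" shows "adjD (e i) (e j) \<longleftrightarrow> (j = Suc i \<or> (i = 0 \<and> j = n - 1))"
proof
  assume a: "adjD (e i) (e j)"
  show "j = Suc i \<or> (i = 0 \<and> j = n - 1)"
  proof (rule ccontr)
    assume c: "\<not> ?thesis"
    then have m: "i < Suc i" "Suc i < j" using assms by auto
    have neg: "D (e i) (e j) (e (Suc i)) < 0" using sign_in[OF m assms(2)] .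
    have allneg: "\<forall>m<n. m \<noteq> i \<longrightarrow> m \<noteq> j \<longrightarrow> D (e i) (e j) (e m) < 0"
    proof -
      have si: "Suc i < n" "Suc i \<noteq> i" "Suc i \<noteq> j" using m assms by auto
      have "\<not> (\<forall>m<n. m \<noteq> i \<longrightarrow> m \<noteq> j \<longrightarrow> D (e i) (e j) (e m) > 0)"
        using si neg by force
      then have "\<not> (\<forall>v\<in>R-{e i, e j}. D (e i) (e j) v > 0)"
        using all_R[of i j "\<lambda>v. D (e i) (e j) v > 0"] assms by simp
      then have "\<forall>v\<in>R-{e i, e j}. D (e i) (e j) v < 0" using a unfolding adjD_def by blast
      then show ?thesis using all_R[of i j "\<lambda>v. D (e i) (e j) v < 0"] assms by auto
    qed
    show False
    proof (cases "i = 0")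
      case True
      then have "j < n - 1" using c assms by auto
      then have "D (e i) (e j) (e (n - 1)) > 0" using sign_out[of i j "n - 1"] assms by auto
      moreover have "n - 1 < n" "n - 1 \<noteq> i" "n - 1 \<noteq> j" using \<open>j < n - 1\<close> assms by auto
      ultimately show False using allneg by force
    next
      case False
      then have "D (e i) (e j) (e 0) > 0" using sign_out[of i j 0] assms by auto
      moreover have "0 < n" "0 \<noteq> i" "0 \<noteq> j" using False assms by auto
      ultimately show False using allneg by force
    qed
  qed
next
  assume a: "j = Suc i \<or> (i = 0 \<and> j = n - 1)"
  show "adjD (e i) (e j)"
  proof (cases "j = Suc i")
    case True
    have "\<forall>m<n. m \<noteq> i \<longrightarrow> m \<noteq> j \<longrightarrow> D (e i) (e j) (e m) > 0"
      using sign_out[of i j] assms True by (metis less_antisym not_less_eq)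
    then show ?thesis unfolding adjD_def using all_R[of i j "\<lambda>v. D (e i) (e j) v > 0"] assms by auto
  next
    case False
    then have ij: "i = 0" "j = n - 1" using a by auto
    have "\<forall>m<n. m \<noteq> i \<longrightarrow> m \<noteq> j \<longrightarrow> D (e i) (e j) (e m) < 0"
      using sign_in[of i _ j] assms ij by auto
    then show ?thesis unfolding adjD_def using all_R[of i j "\<lambda>v. D (e i) (e j) v < 0"] assms by auto
  qed
qed

lemma adj_e: assumes "i < n" "j < n"
  shows "adj (e i) (e j) \<longleftrightarrow> (j = Suc i \<or> i = Suc j \<or> (i = 0 \<and> j = n - 1 \<and> n > 1) \<or> (j = 0 \<and> i = n - 1 \<and> n > 1))"
proof (cases i j rule: linorder_cases)
  case less
  then show ?thesis using adj_idx[OF less assms(2)] e_in e_inj assms unfolding adj_def by auto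
next
  case equal
  then show ?thesis unfolding adj_def by auto
next
  case greater
  then show ?thesis using adj_idx[OF greater assms(1)] adjD_sym e_in e_inj assms unfolding adj_def by auto
qed

end

lemma flip:
  assumes pos: "0 < \<alpha>" "0 < \<beta>" "0 < \<gamma>" "0 < \<delta>" and eq: "\<alpha> *\<^sub>R a + \<beta> *\<^sub>R b = \<gamma> *\<^sub>R c + \<delta> *\<^sub>R d"
    and mem: "a \<in> pos_cone X" "b \<in> pos_cone X" "-c \<in> pos_cone X" "-d \<in> pos_cone X"
  shows "-a \<in> pos_cone X" "-b \<in> pos_cone X" "c \<in> pos_cone X" "d \<in> pos_cone X"
proof -
  have e1: "\<alpha> *\<^sub>R a + \<beta> *\<^sub>R b + \<delta> *\<^sub>R (-d) = \<gamma> *\<^sub>R c"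
    unfolding eq by simp
  have "c = (1/\<gamma>) *\<^sub>R (\<gamma> *\<^sub>R c)" using pos by simp
  also have "\<dots> \<in> pos_cone X" unfolding e1[symmetric] using pos mem by (intro pc_scale pc_add) auto
  finally show "c \<in> pos_cone X" .
  have e2: "\<alpha> *\<^sub>R a + \<beta> *\<^sub>R b + \<gamma> *\<^sub>R (-c) = \<delta> *\<^sub>R d"
    unfolding eq by simp
  have "d = (1/\<delta>) *\<^sub>R (\<delta> *\<^sub>R d)" using pos by simp
  also have "\<dots> \<in> pos_cone X" unfolding e2[symmetric] using pos mem by (intro pc_scale pc_add) auto
  finally show "d \<in> pos_cone X" .
  have e3: "\<beta> *\<^sub>R b + \<gamma> *\<^sub>R (-c) + \<delta> *\<^sub>R (-d) = \<alpha> *\<^sub>R (-a)"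
  proof -
    have "\<beta> *\<^sub>R b + \<gamma> *\<^sub>R (-c) + \<delta> *\<^sub>R (-d) = \<beta> *\<^sub>R b - (\<gamma> *\<^sub>R c + \<delta> *\<^sub>R d)" by (simp add: algebra_simps)
    also have "\<dots> = \<beta> *\<^sub>R b - (\<alpha> *\<^sub>R a + \<beta> *\<^sub>R b)" unfolding eq ..
    also have "\<dots> = \<alpha> *\<^sub>R (-a)" by simp
    finally show ?thesis .
  qed
  have "-a = (1/\<alpha>) *\<^sub>R (\<alpha> *\<^sub>R (-a))" using pos by simp
  also have "\<dots> \<in> pos_cone X" unfolding e3[symmetric] using pos mem by (intro pc_scale pc_add) auto
  finally show "-a \<in> pos_cone X" .
  have e4: "\<alpha> *\<^sub>R a + \<gamma> *\<^sub>R (-c) + \<delta> *\<^sub>R (-d) = \<beta> *\<^sub>R (-b)"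
  proof -
    have "\<alpha> *\<^sub>R a + \<gamma> *\<^sub>R (-c) + \<delta> *\<^sub>R (-d) = \<alpha> *\<^sub>R a - (\<gamma> *\<^sub>R c + \<delta> *\<^sub>R d)" by (simp add: algebra_simps)
    also have "\<dots> = \<alpha> *\<^sub>R a - (\<alpha> *\<^sub>R a + \<beta> *\<^sub>R b)" unfolding eq ..
    also have "\<dots> = \<beta> *\<^sub>R (-b)" by simp
    finally show ?thesis .
  qed
  have "-b = (1/\<beta>) *\<^sub>R (\<beta> *\<^sub>R (-b))" using pos by simp
  also have "\<dots> \<in> pos_cone X" unfolding e4[symmetric] using pos mem by (intro pc_scale pc_add) auto
  finally show "-b \<in> pos_cone X" .
qed

lemma signed_in: assumes "u \<in> pos_cone X" "-u \<in> pos_cone X" shows "c *\<^sub>R u \<in> pos_cone X"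
proof (cases "c \<ge> 0")
  case True then show ?thesis using pc_scale assms by blast
next
  case False
  then have "c *\<^sub>R u = (-c) *\<^sub>R (-u)" by simp
  also have "\<dots> \<in> pos_cone X" using False assms by (intro pc_scale) auto
  finally show ?thesis .
qed

lemma span_univ:
  assumes "u \<in> pos_cone X" "-u \<in> pos_cone X" "v \<in> pos_cone X" "-v \<in> pos_cone X"
    "w \<in> pos_cone X" "-w \<in> pos_cone X" "det3 u v w \<noteq> 0"
  shows "pos_cone X = UNIV"
proof -
  have "y \<in> pos_cone X" for y
  proof -
    define d where "d = det3 u v w"
    have d0: "d \<noteq> 0" using assms(7) by (simp add: d_def)
    have cr: "d *\<^sub>R y = det3 y v w *\<^sub>R u + det3 u y w *\<^sub>R v + det3 u v y *\<^sub>R w" unfolding d_def by (rule cramer)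
    have "y = (1/d) *\<^sub>R (d *\<^sub>R y)" using d0 by simp
    also have "\<dots> = (det3 y v w / d) *\<^sub>R u + (det3 u y w / d) *\<^sub>R v + (det3 u v y / d) *\<^sub>R w"
      unfolding cr by (simp add: scaleR_add_right)
    also have "\<dots> \<in> pos_cone X" using assms by (intro pc_add signed_in) auto
    finally show ?thesis .
  qed
  then show ?thesis by auto
qed


context model begin
definition "rel P = {(x,y). x \<in> P \<and> y \<in> P \<and> adj x y}"
definition "mto P \<longleftrightarrow> (\<exists>a\<in>P. \<exists>b\<in>P. (a,b) \<notin> (rel P)\<^sup>*)"

lemma rel_conv: assumes "(a,b) \<in> (rel P)\<^sup>*" shows "(b,a) \<in> (rel P)\<^sup>*"
proof -
  have c: "(rel P)\<inverse> = rel P" unfolding rel_def using adj_sym by auto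
  show ?thesis using rtrancl_converseI[OF assms] unfolding c .
qed

lemma pc_empty: "pos_cone {} = {0}"
  using pc_fin[of "{}"] by simp
end

context model0 begin

lemma cross_rel: "D (e i) (e k) (e l) *\<^sub>R g (e j) + D (e i) (e j) (e k) *\<^sub>R g (e l)
   = D (e i) (e j) (e l) *\<^sub>R g (e k) + D (e j) (e k) (e l) *\<^sub>R g (e i)"
  by (rule four_D')

lemma alt_cone: assumes ord: "i < j" "j < k" "k < l" "l < n" and P: "P \<subseteq> R"
  and pat: "(e i \<in> P \<and> e k \<in> P \<and> e j \<notin> P \<and> e l \<notin> P) \<or> (e i \<notin> P \<and> e k \<notin> P \<and> e j \<in> P \<and> e l \<in> P)"
  shows "pos_cone (g`P) \<inter> pos_cone (g`(R-P)) \<noteq> {0}"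
proof -
  have R: "e i \<in> R" "e j \<in> R" "e k \<in> R" "e l \<in> R" using ord e_in by auto
  have p1: "D (e i) (e k) (e l) > 0" "D (e i) (e j) (e k) > 0" "D (e i) (e j) (e l) > 0" "D (e j) (e k) (e l) > 0"
    using pos3 ord by auto
  define y where "y = D (e i) (e j) (e l) *\<^sub>R g (e k) + D (e j) (e k) (e l) *\<^sub>R g (e i)"
  have y2: "y = D (e i) (e k) (e l) *\<^sub>R g (e j) + D (e i) (e j) (e k) *\<^sub>R g (e l)"
    unfolding y_def by (rule cross_rel[symmetric])
  have "D (e j) (e k) (e l) *\<^sub>R g (e i) \<in> \<sigma>" using R p1 by (intro sgin) auto
  then have y0: "y \<noteq> 0" using pointed_pos[OF R(3) p1(3)] unfolding y_def by blast
  show ?thesis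
  proof (cases "e i \<in> P \<and> e k \<in> P \<and> e j \<notin> P \<and> e l \<notin> P")
    case True
    have "y \<in> pos_cone (g`P)" unfolding y_def using True p1 by (intro pc_add sgin) auto
    moreover have "y \<in> pos_cone (g`(R-P))" unfolding y2 using True p1 R by (intro pc_add sgin) auto
    ultimately show ?thesis using y0 by blast
  next
    case False
    then have F: "e i \<notin> P \<and> e k \<notin> P \<and> e j \<in> P \<and> e l \<in> P" using pat by blast
    have "y \<in> pos_cone (g`(R-P))" unfolding y_def using F p1 R by (intro pc_add sgin) auto
    moreover have "y \<in> pos_cone (g`P)" unfolding y2 using F p1 by (intro pc_add sgin) auto
    ultimately show ?thesis using y0 by blast
  qed
qed

lemma alt_univ: assumes ord: "i < j" "j < k" "k < l" "l < n" and P: "P \<subseteq> R"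
  and pat: "(e i \<in> P \<and> e k \<in> P \<and> e j \<notin> P \<and> e l \<notin> P) \<or> (e i \<notin> P \<and> e k \<notin> P \<and> e j \<in> P \<and> e l \<in> P)"
  shows "pos_cone ((\<lambda>r. - g r)`P \<union> g`(R-P)) = UNIV"
proof -
  define X where "X = (\<lambda>r. - g r)`P \<union> g`(R-P)"
  have R: "e i \<in> R" "e j \<in> R" "e k \<in> R" "e l \<in> R" using ord e_in by auto
  have p1: "D (e i) (e k) (e l) > 0" "D (e i) (e j) (e k) > 0" "D (e i) (e j) (e l) > 0" "D (e j) (e k) (e l) > 0"
    using pos3 ord by auto
  have neg: "r \<in> P \<Longrightarrow> - g r \<in> pos_cone X" for r unfolding X_def by (intro pc_gen) auto
  have ps: "r \<in> R - P \<Longrightarrow> g r \<in> pos_cone X" for r unfolding X_def by (intro pc_gen) auto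
  have all: "g (e i) \<in> pos_cone X \<and> - g (e i) \<in> pos_cone X \<and> g (e j) \<in> pos_cone X \<and> - g (e j) \<in> pos_cone X
     \<and> g (e k) \<in> pos_cone X \<and> - g (e k) \<in> pos_cone X"
  proof (cases "e i \<in> P \<and> e k \<in> P \<and> e j \<notin> P \<and> e l \<notin> P")
    case True
    note fl = flip[OF p1(1) p1(2) p1(3) p1(4) cross_rel, of X]
    have m: "g (e j) \<in> pos_cone X" "g (e l) \<in> pos_cone X" "- g (e k) \<in> pos_cone X" "- g (e i) \<in> pos_cone X"
      using True R neg ps by auto
    show ?thesis using fl[OF m] m by auto
  next
    case False
    then have F: "e i \<notin> P \<and> e k \<notin> P \<and> e j \<in> P \<and> e l \<in> P" using pat by blast
    have cr: "D (e i) (e j) (e l) *\<^sub>R g (e k) + D (e j) (e k) (e l) *\<^sub>R g (e i)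
       = D (e i) (e k) (e l) *\<^sub>R g (e j) + D (e i) (e j) (e k) *\<^sub>R g (e l)"
      using cross_rel[symmetric] .
    note fl = flip[OF p1(3) p1(4) p1(1) p1(2) cr, of X]
    have m: "g (e k) \<in> pos_cone X" "g (e i) \<in> pos_cone X" "- g (e j) \<in> pos_cone X" "- g (e l) \<in> pos_cone X"
      using F R neg ps by auto
    show ?thesis using fl[OF m] m by auto
  qed
  have "det3 (g (e i)) (g (e j)) (g (e k)) \<noteq> 0" using p1 by (simp add: D_def)
  then show ?thesis using span_univ all unfolding X_def by blast
qed

lemma arc: assumes st: "s < t" "t < n" "e s \<notin> P" "e t \<notin> P" and P: "P \<subseteq> R"
  and rt: "(x,y) \<in> (rel P)\<^sup>*" and x: "x \<in> P" "s < idx x" "idx x < t"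
  shows "s < idx y \<and> idx y < t"
  using rt
proof (induction rule: rtrancl_induct)
  case base then show ?case using x by auto
next
  case (step y z)
  then have yz: "y \<in> P" "z \<in> P" "adj y z" unfolding rel_def by auto
  define a where "a = idx y"
  define b where "b = idx z"
  have ab: "a < n" "b < n" "y = e a" "z = e b" using yz P idx_range e_idx unfolding a_def b_def by auto
  have ad: "b = Suc a \<or> a = Suc b \<or> (a = 0 \<and> b = n - 1 \<and> n > 1) \<or> (b = 0 \<and> a = n - 1 \<and> n > 1)"
    using adj_e[of a b] ab yz by auto
  have IH: "s < a" "a < t" using step.IH unfolding a_def by auto
  have "b \<noteq> t" using yz st ab by auto
  moreover have "b \<noteq> s" using yz st ab by auto
  ultimately show ?case using ad IH st unfolding b_def[symmetric] by auto
qed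

definition "Alt P \<longleftrightarrow> (\<exists>i j k l. i < j \<and> j < k \<and> k < l \<and> l < n \<and>
   ((e i \<in> P \<and> e k \<in> P \<and> e j \<notin> P \<and> e l \<notin> P) \<or> (e i \<notin> P \<and> e k \<notin> P \<and> e j \<in> P \<and> e l \<in> P)))"

lemma alt_mto: assumes "Alt P" "P \<subseteq> R" shows "mto P"
proof -
  obtain i j k l where o: "i < j" "j < k" "k < l" "l < n" and
    pat: "(e i \<in> P \<and> e k \<in> P \<and> e j \<notin> P \<and> e l \<notin> P) \<or> (e i \<notin> P \<and> e k \<notin> P \<and> e j \<in> P \<and> e l \<in> P)"
    using assms unfolding Alt_def by blast
  have ie: "idx (e i) = i" "idx (e j) = j" "idx (e k) = k" "idx (e l) = l" using o idx_e by auto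
  show ?thesis
  proof (cases "e i \<in> P \<and> e k \<in> P \<and> e j \<notin> P \<and> e l \<notin> P")
    case True
    have "(e k, e i) \<notin> (rel P)\<^sup>*"
    proof
      assume "(e k, e i) \<in> (rel P)\<^sup>*"
      from arc[of j l P, OF _ _ _ _ assms(2) this] show False using True o ie by auto
    qed
    then show ?thesis unfolding mto_def using True by blast
  next
    case False
    then have F: "e i \<notin> P \<and> e k \<notin> P \<and> e j \<in> P \<and> e l \<in> P" using pat by blast
    have "(e j, e l) \<notin> (rel P)\<^sup>*"
    proof
      assume "(e j, e l) \<in> (rel P)\<^sup>*"
      from arc[of i k P, OF _ _ _ _ assms(2) this] show False using F o ie by auto
    qed
    then show ?thesis unfolding mto_def using F by blast
  qed
qed

lemma chain: assumes "q < n" "\<And>m. p \<le> m \<Longrightarrow> m \<le> q \<Longrightarrow> e m \<in> P"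
  shows "p + k \<le> q \<Longrightarrow> (e p, e (p + k)) \<in> (rel P)\<^sup>*"
proof (induction k)
  case 0 then show ?case by simp
next
  case (Suc k)
  then have "(e p, e (p + k)) \<in> (rel P)\<^sup>*" by simp
  moreover have "(e (p + k), e (p + Suc k)) \<in> rel P"
    unfolding rel_def using assms Suc.prems adj_e[of "p + k" "p + Suc k"] by auto
  ultimately show ?case by simp
qed

lemma chain': assumes "q < n" "\<And>m. p \<le> m \<Longrightarrow> m \<le> q \<Longrightarrow> e m \<in> P" "p \<le> m" "m \<le> q"
  shows "(e p, e m) \<in> (rel P)\<^sup>*"
proof -
  have "(e p, e (p + (m - p))) \<in> (rel P)\<^sup>*"
    using chain[where q=q and p=p and P=P and k="m - p"] assms by auto
  then show ?thesis using assms(3) by simp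
qed

end

context model0 begin

lemma disj: assumes pq: "p \<le> q" "q < n" and A: "A = {r \<in> R. p \<le> idx r \<and> idx r \<le> q}"
  shows "pos_cone (g`A) \<inter> pos_cone (g`(R - A)) = {0}"
proof -
  have AR: "A \<subseteq> R" using A by auto
  have fA: "finite A" "inj_on g A" using AR fin inj finite_subset inj_on_subset by blast+
  have fB: "finite (R - A)" "inj_on g (R - A)" using fin inj inj_on_subset[of g R "R - A"] by auto
  have "x = 0" if x1: "x \<in> pos_cone (g`A)" and x2: "x \<in> pos_cone (g`(R - A))" for x
  proof (cases "p = q")
    case True
    have Ae: "A = {e p}"
    proof
      show "A \<subseteq> {e p}" using A True e_idx by auto
      show "{e p} \<subseteq> A" using A True pq e_in idx_e by auto
    qed
    obtain c where c: "0 \<le> c (e p)" "x = c (e p) *\<^sub>R g (e p)"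
      using x1 pc_image[OF fA] unfolding Ae by auto
    have ep: "e p \<in> R" using e_in pq by auto
    show "x = 0"
    proof (rule ccontr)
      assume "x \<noteq> 0"
      then have "c (e p) \<noteq> 0" unfolding c(2) by (metis scale_zero_left)
      then have "c (e p) > 0" using c(1) by linarith
      moreover have "x \<in> pos_cone (g`(R - {e p}))" using x2 unfolding Ae .
      ultimately show False using ext_gen[OF ep _ _ c(2)[symmetric]] by blast
    qed
  next
    case False
    then have pq': "p < q" using pq by auto
    define f where "f y = det3 (g (e p)) (g (e q)) y" for y
    have fR: "f (g r) = D (e p) (e q) r" for r by (simp add: f_def D_def)
    obtain c where c: "\<forall>r\<in>A. 0 \<le> c r" "x = (\<Sum>r\<in>A. c r *\<^sub>R g r)" using x1 pc_image[OF fA] by auto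
    obtain d where d: "\<forall>r\<in>R-A. 0 \<le> d r" "x = (\<Sum>r\<in>R-A. d r *\<^sub>R g r)" using x2 pc_image[OF fB] by auto
    have fpos: "D (e p) (e q) r > 0" if r: "r \<in> R - A" for r
    proof -
      have "idx r < n" "idx r < p \<or> q < idx r" using r idx_range A by auto
      then have "D (e p) (e q) (e (idx r)) > 0" using sign_out[OF pq' pq(2)] by blast
      then show ?thesis using e_idx r by auto
    qed
    have fneg: "D (e p) (e q) r \<le> 0" if r: "r \<in> A" for r
    proof -
      have m: "p \<le> idx r" "idx r \<le> q" "r = e (idx r)" using r A e_idx by auto
      show ?thesis
      proof (cases "idx r = p \<or> idx r = q")
        case True
        then have "r = e p \<or> r = e q" using m by metis
        then show ?thesis using D_rep(2)[of "e p" "e q"] D_rep(3)[of "e p" "e q"] by auto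
      next
        case False
        then have "p < idx r" "idx r < q" using m by auto
        then have "D (e p) (e q) (e (idx r)) < 0" using sign_in pq by blast
        then show ?thesis using m by simp
      qed
    qed
    have fx1: "f x = (\<Sum>r\<in>A. c r * D (e p) (e q) r)"
      unfolding c(2) f_def by (simp add: det3_sum3 det3_scale3 D_def)
    have fx2: "f x = (\<Sum>r\<in>R-A. d r * D (e p) (e q) r)"
      unfolding d(2) f_def by (simp add: det3_sum3 det3_scale3 D_def)
    have "(\<Sum>r\<in>A. c r * D (e p) (e q) r) \<le> 0"
      using c(1) fneg by (intro sum_nonpos) (simp add: mult_nonneg_nonpos)
    then have le: "(\<Sum>r\<in>R-A. d r * D (e p) (e q) r) \<le> 0" using fx1 fx2 by simp
    have nn: "\<forall>r\<in>R-A. 0 \<le> d r * D (e p) (e q) r" using d(1) fpos by (simp add: less_imp_le)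
    have "0 \<le> (\<Sum>r\<in>R-A. d r * D (e p) (e q) r)" by (rule sum_nonneg) (use nn in blast)
    then have "(\<Sum>r\<in>R-A. d r * D (e p) (e q) r) = 0" using le by linarith
    then have z: "\<forall>r\<in>R-A. d r * D (e p) (e q) r = 0" 
      using sum_nonneg_eq_0_iff[OF fB(1), of "\<lambda>r. d r * D (e p) (e q) r"] nn by blast
    have dz: "\<forall>r\<in>R-A. d r = 0"
    proof
      fix r assume r: "r \<in> R - A"
      then have "d r * D (e p) (e q) r = 0" "D (e p) (e q) r \<noteq> 0" using z fpos[OF r] by auto
      then show "d r = 0" by simp
    qed
    have "(\<Sum>r\<in>R-A. d r *\<^sub>R g r) = 0" by (rule sum.neutral) (use dz in simp)
    then show "x = 0" using d(2) by simp
  qed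
  moreover have "0 \<in> pos_cone (g`A)" "0 \<in> pos_cone (g`(R-A))" by (auto intro: pc_0)
  ultimately show ?thesis by blast
qed

end

context model0 begin

lemma conn_all: assumes "\<And>r. r \<in> P \<Longrightarrow> (c, r) \<in> (rel P)\<^sup>*" shows "\<not> mto P"
  unfolding mto_def using assms rel_conv rtrancl_trans by metis

lemma noalt: assumes nA: "\<not> Alt P" and P: "P \<subseteq> R"
  shows "pos_cone (g`P) \<inter> pos_cone (g`(R-P)) = {0} \<and> \<not> mto P"
proof (cases "P = {}")
  case True
  then show ?thesis using pc_empty pc_0 unfolding mto_def by auto
next
  case False
  define I where "I = {m. m < n \<and> e m \<in> P}"
  have fI: "finite I" unfolding I_def by auto
  obtain r1 where r1: "r1 \<in> P" using False by blast
  have "idx r1 \<in> I" unfolding I_def using r1 P idx_range e_idx by auto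
  then have neI: "I \<noteq> {}" by blast
  define i0 where "i0 = Min I"
  define j0 where "j0 = Max I"
  have inI: "m \<in> I \<Longrightarrow> i0 \<le> m \<and> m \<le> j0" for m unfolding i0_def j0_def using fI by auto
  have i0I: "i0 \<in> I" and j0I: "j0 \<in> I" unfolding i0_def j0_def using fI neI by auto
  have j0n: "j0 < n" using j0I unfolding I_def by auto
  have Pidx: "r \<in> P \<Longrightarrow> idx r \<in> I" for r unfolding I_def using P idx_range e_idx by auto
  have eidx: "r \<in> P \<Longrightarrow> e (idx r) = r" for r using P e_idx by auto
  show ?thesis
  proof (cases "\<forall>m. i0 \<le> m \<and> m \<le> j0 \<longrightarrow> e m \<in> P")
    case True
    have PA: "P = {r \<in> R. i0 \<le> idx r \<and> idx r \<le> j0}"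
    proof
      show "P \<subseteq> {r \<in> R. i0 \<le> idx r \<and> idx r \<le> j0}" using P Pidx inI by auto
      show "{r \<in> R. i0 \<le> idx r \<and> idx r \<le> j0} \<subseteq> P" using True e_idx by force
    qed
    have "pos_cone (g`P) \<inter> pos_cone (g`(R-P)) = {0}"
      using disj[OF _ j0n PA] inI[OF i0I] by auto
    moreover have "\<not> mto P"
    proof (rule conn_all)
      fix r assume r: "r \<in> P"
      have "(e i0, e (idx r)) \<in> (rel P)\<^sup>*"
        using chain'[OF j0n, of i0 P "idx r"] True inI[OF Pidx[OF r]] by auto
      then show "(e i0, r) \<in> (rel P)\<^sup>*" using eidx[OF r] by simp
    qed
    ultimately show ?thesis by blast
  next
    case False
    then obtain m where m: "i0 \<le> m" "m \<le> j0" "e m \<notin> P" by blast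
    have ei0: "e i0 \<in> P" "i0 < n" and ej0: "e j0 \<in> P" using i0I j0I unfolding I_def by auto
    have mm: "i0 < m" "m < j0" using m ei0 ej0 le_neq_implies_less by metis+
    have i00: "i0 = 0"
    proof (rule ccontr)
      assume "i0 \<noteq> 0"
      then have "e 0 \<notin> P" using inI[of 0] unfolding I_def using j0n by auto
      then have "Alt P" unfolding Alt_def using mm \<open>i0 \<noteq> 0\<close> j0n ei0 ej0 m
        by (intro exI[of _ 0] exI[of _ i0] exI[of _ m] exI[of _ j0]) auto
      then show False using nA by blast
    qed
    have j0e: "j0 = n - 1"
    proof (rule ccontr)
      assume "j0 \<noteq> n - 1"
      then have jn: "j0 < n - 1" using j0n by auto
      then have "e (n - 1) \<notin> P" using inI[of "n - 1"] unfolding I_def by auto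
      then have "Alt P" unfolding Alt_def using mm jn ei0 ej0 m
        by (intro exI[of _ i0] exI[of _ m] exI[of _ j0] exI[of _ "n - 1"]) auto
      then show False using nA by blast
    qed
    define J where "J = {m. m < n \<and> e m \<notin> P}"
    have fJ: "finite J" unfolding J_def by auto
    have mJ: "m \<in> J" unfolding J_def using m j0n by auto
    then have neJ: "J \<noteq> {}" by blast
    define i1 where "i1 = Min J"
    define j1 where "j1 = Max J"
    have inJ: "k \<in> J \<Longrightarrow> i1 \<le> k \<and> k \<le> j1" for k unfolding i1_def j1_def using fJ by auto
    have i1J: "i1 \<in> J" and j1J: "j1 \<in> J" unfolding i1_def j1_def using fJ neJ by auto
    have e0P: "e 0 \<in> P" using ei0 i00 by simp
    have enP: "e (n - 1) \<in> P" using ej0 j0e by simp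
    have i1p: "0 < i1" using i1J e0P unfolding J_def by (metis (mono_tags) mem_Collect_eq neq0_conv)
    have j1n: "j1 < n - 1" using j1J enP unfolding J_def by (metis (mono_tags) mem_Collect_eq less_antisym Suc_pred' not_less_zero neq0_conv le_neq_implies_less less_imp_diff_less diff_Suc_1 linorder_neqE_nat)
    have i1j1: "i1 \<le> j1" using inJ[OF i1J] by auto
    have gap: "\<forall>k. i1 \<le> k \<and> k \<le> j1 \<longrightarrow> e k \<notin> P"
    proof (intro allI impI)
      fix k assume k: "i1 \<le> k \<and> k \<le> j1"
      show "e k \<notin> P"
      proof
        assume ek: "e k \<in> P"
        have ni: "e i1 \<notin> P" "e j1 \<notin> P" using i1J j1J unfolding J_def by auto
        have "i1 < k" "k < j1" using k ek ni le_neq_implies_less by metis+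
        then have "Alt P" unfolding Alt_def using i1p j1n e0P ek ni
          by (intro exI[of _ 0] exI[of _ i1] exI[of _ k] exI[of _ j1]) auto
        then show False using nA by blast
      qed
    qed
    have QA: "R - P = {r \<in> R. i1 \<le> idx r \<and> idx r \<le> j1}"
    proof
      show "R - P \<subseteq> {r \<in> R. i1 \<le> idx r \<and> idx r \<le> j1}"
      proof
        fix r assume r: "r \<in> R - P"
        then have "idx r \<in> J" unfolding J_def using idx_range e_idx by auto
        then show "r \<in> {r \<in> R. i1 \<le> idx r \<and> idx r \<le> j1}" using inJ r by auto
      qed
      show "{r \<in> R. i1 \<le> idx r \<and> idx r \<le> j1} \<subseteq> R - P" using gap e_idx by force
    qed
    have RRP: "R - (R - P) = P" using P by auto
    have j1n': "j1 < n" using j1n by auto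
    have "pos_cone (g`(R-P)) \<inter> pos_cone (g`(R-(R-P))) = {0}" using disj[OF i1j1 j1n' QA] .
    then have "pos_cone (g`P) \<inter> pos_cone (g`(R-P)) = {0}" unfolding RRP by blast
    moreover have "\<not> mto P"
    proof (rule conn_all)
      fix r assume r: "r \<in> P"
      have lowP: "\<And>k. 0 \<le> k \<Longrightarrow> k \<le> i1 - 1 \<Longrightarrow> e k \<in> P"
      proof -
        fix k assume "0 \<le> k" "k \<le> i1 - 1"
        then have "k < i1" "k < n" using i1p j1n i1j1 by auto
        then show "e k \<in> P" using inJ[of k] unfolding J_def by auto
      qed
      have highP: "\<And>k. Suc j1 \<le> k \<Longrightarrow> k \<le> n - 1 \<Longrightarrow> e k \<in> P"
      proof -
        fix k assume "Suc j1 \<le> k" "k \<le> n - 1"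
        then have "j1 < k" "k < n" using j1n by auto
        then show "e k \<in> P" using inJ[of k] unfolding J_def by auto
      qed
      have ri: "idx r < i1 \<or> j1 < idx r" "idx r < n" using r P QA idx_range by auto
      show "(e 0, r) \<in> (rel P)\<^sup>*"
      proof (cases "idx r < i1")
        case True
        have "(e 0, e (idx r)) \<in> (rel P)\<^sup>*"
          using chain'[of "i1 - 1" 0 P "idx r"] lowP True i1p j1n i1j1 by auto
        then show ?thesis using eidx[OF r] by simp
      next
        case False
        then have hi: "Suc j1 \<le> idx r" using ri by auto
        have n1: "n - 1 < n" using j1n by auto
        have a: "(e (Suc j1), e (idx r)) \<in> (rel P)\<^sup>*"
          using chain'[OF n1, of "Suc j1" P "idx r"] highP hi ri by auto
        have b: "(e (Suc j1), e (n - 1)) \<in> (rel P)\<^sup>*"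
          using chain'[OF n1, of "Suc j1" P "n - 1"] highP j1n by auto
        have c: "(e 0, e (n - 1)) \<in> rel P"
          unfolding rel_def using e0P enP adj_e[of 0 "n - 1"] j1n by auto
        have "(e 0, e (idx r)) \<in> (rel P)\<^sup>*"
          using c rel_conv[OF b] a by (meson r_into_rtrancl rtrancl_trans)
        then show ?thesis using eidx[OF r] by simp
      qed
    qed
    ultimately show ?thesis by blast
  qed
qed

lemma main0: assumes P: "P \<subseteq> R"
  shows "(pos_cone (g`P) \<inter> pos_cone (g`(R-P)) \<noteq> {0} \<longleftrightarrow> mto P)
       \<and> (mto P \<longrightarrow> pos_cone ((\<lambda>r. - g r)`P \<union> g`(R-P)) = UNIV)"
proof (cases "Alt P")
  case True
  then obtain i j k l where o: "i < j" "j < k" "k < l" "l < n" and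
    pat: "(e i \<in> P \<and> e k \<in> P \<and> e j \<notin> P \<and> e l \<notin> P) \<or> (e i \<notin> P \<and> e k \<notin> P \<and> e j \<in> P \<and> e l \<in> P)"
    unfolding Alt_def by blast
  show ?thesis using alt_cone[OF o P pat] alt_univ[OF o P pat] alt_mto[OF True P] by blast
next
  case False
  then show ?thesis using noalt[OF False P] by blast
qed

end

context model begin
lemma main: assumes P: "P \<subseteq> R"
  shows "(pos_cone (g`P) \<inter> pos_cone (g`(R-P)) \<noteq> {0} \<longleftrightarrow> mto P)
       \<and> (mto P \<longrightarrow> pos_cone ((\<lambda>r. - g r)`P \<union> g`(R-P)) = UNIV)"
proof (cases "R = {}")
  case True
  then have "P = {}" using P by auto
  then show ?thesis using True pc_empty unfolding mto_def by auto
next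
  case False
  then obtain r0 where "r0 \<in> R" by blast
  then interpret model0 R g r0 by unfold_locales
  show ?thesis using main0[OF P] .
qed
end


lemma pc_convex: "convex (pos_cone T)"
  unfolding convex_def by (auto intro!: pc_add pc_scale)

lemma pc_split: assumes "finite T" "s \<in> T" "x \<in> pos_cone T"
  shows "\<exists>c w. 0 \<le> c \<and> w \<in> pos_cone (T - {s}) \<and> x = c *\<^sub>R s + w"
proof -
  obtain c where c: "\<forall>v\<in>T. 0 \<le> c v" "x = (\<Sum>v\<in>T. c v *\<^sub>R v)" using assms pc_fin by auto
  have "x = c s *\<^sub>R s + (\<Sum>v\<in>T-{s}. c v *\<^sub>R v)" using c(2) sum.remove[OF assms(1,2)] by simp
  moreover have "(\<Sum>v\<in>T-{s}. c v *\<^sub>R v) \<in> pos_cone (T - {s})" using c(1) assms(1) by (intro pc_comb pc_gen) auto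
  ultimately show ?thesis using c(1) assms(2) by blast
qed

lemma pc_remove: assumes "s \<in> pos_cone (T - {s})" shows "pos_cone T = pos_cone (T - {s})"
proof
  have "T \<subseteq> pos_cone (T - {s})"
  proof
    fix v assume "v \<in> T" then show "v \<in> pos_cone (T - {s})" using assms by (cases "v = s") (auto intro: pc_gen)
  qed
  then show "pos_cone T \<subseteq> pos_cone (T - {s})" by (rule pc_sub)
  show "pos_cone (T - {s}) \<subseteq> pos_cone T" by (rule pc_mono) auto
qed

lemma face_scale: assumes F: "F face_of pos_cone T" and z: "z \<in> F" and t: "0 \<le> t" shows "t *\<^sub>R z \<in> F"
proof -
  have zT: "z \<in> pos_cone T" using F z face_of_imp_subset by blast
  consider "z = 0" | "t = 1" | "z \<noteq> 0" "t < 1" | "z \<noteq> 0" "t > 1" by linarith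
  then show ?thesis
  proof cases
    case 1 then show ?thesis using z by simp
  next
    case 2 then show ?thesis using z by simp
  next
    case 3
    have ne: "t *\<^sub>R z \<noteq> (2 - t) *\<^sub>R z" using 3 by (simp add: scaleR_cancel_right)
    have eq: "z = (1 - 1/2) *\<^sub>R (t *\<^sub>R z) + (1/2) *\<^sub>R ((2 - t) *\<^sub>R z)"
    proof -
      have "t / 2 + (2 - t) / 2 = (1::real)" by (simp add: field_simps)
      then show ?thesis by (simp only: scaleR_scaleR scaleR_left_distrib[symmetric]) simp
    qed
    have "z \<in> open_segment (t *\<^sub>R z) ((2 - t) *\<^sub>R z)"
      unfolding in_segment using ne eq by (intro conjI exI[of _ "1/2"]) auto
    moreover have "t *\<^sub>R z \<in> pos_cone T" "(2 - t) *\<^sub>R z \<in> pos_cone T" using zT t 3 by (auto intro: pc_scale)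
    ultimately show ?thesis using face_ofD[OF F] z by blast
  next
    case 4
    have "z \<in> open_segment 0 (t *\<^sub>R z)"
      unfolding in_segment using 4
      by (intro conjI exI[of _ "1/t"]) auto
    moreover have "0 \<in> pos_cone T" "t *\<^sub>R z \<in> pos_cone T" using zT t by (auto intro: pc_scale pc_0)
    ultimately show ?thesis using face_ofD[OF F] z by blast
  qed
qed

lemma face_sum: assumes F: "F face_of pos_cone T" and yz: "y \<in> pos_cone T" "z \<in> pos_cone T" "y + z \<in> F"
  shows "y \<in> F"
proof (cases "y = z")
  case True
  then have "(1/2) *\<^sub>R (y + z) = y" by (simp add: scaleR_2[symmetric])
  then show ?thesis using face_scale[OF F yz(3), of "1/2"] by simp
next
  case False
  have "y + z \<in> open_segment (2 *\<^sub>R y) (2 *\<^sub>R z)"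
    unfolding in_segment using False
    by (intro conjI exI[of _ "1/2"]) (auto simp: algebra_simps)
  moreover have "2 *\<^sub>R y \<in> pos_cone T" "2 *\<^sub>R z \<in> pos_cone T" using yz by (auto intro: pc_scale)
  ultimately have "2 *\<^sub>R y \<in> F" using face_ofD[OF F] yz(3) by blast
  then show ?thesis using face_scale[OF F, of "2 *\<^sub>R y" "1/2"] by simp
qed

lemma aff_dim0: fixes S :: "(real^3) set" assumes "0 \<in> S" shows "aff_dim S = int (dim S)"
  using aff_dim_eq_dim[of 0 S] assms hull_inc by fastforce

lemma dim_same_span: "span A = span B \<Longrightarrow> dim A = dim B"
  by (metis dim_span)

definition ray :: "real^3 \<Rightarrow> (real^3) set" where "ray v = {t *\<^sub>R v | t. 0 \<le> t}"

lemma ray_0: "0 \<in> ray v" unfolding ray_def by (auto intro!: exI[of _ 0])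
lemma ray_self: "v \<in> ray v" unfolding ray_def by (auto intro!: exI[of _ 1])
lemma ray_sub_span: "ray v \<subseteq> span {v}" unfolding ray_def by (auto intro: span_mul span_base)

lemma span_ray: "span (ray v) = span {v}"
  unfolding span_eq using ray_sub_span ray_self span_base by blast

lemma aff_dim_ray: "v \<noteq> 0 \<Longrightarrow> aff_dim (ray v) = 1"
  using aff_dim0[OF ray_0] dim_same_span[OF span_ray] by simp

lemma ray_scale: "0 < c \<Longrightarrow> ray (c *\<^sub>R v) = ray v"
  unfolding ray_def
proof (safe)
  fix t :: real assume "0 < c" "0 \<le> t"
  then show "\<exists>t'. t *\<^sub>R c *\<^sub>R v = t' *\<^sub>R v \<and> 0 \<le> t'" by (intro exI[of _ "t * c"]) auto
next
  fix t :: real assume "0 < c" "0 \<le> t"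
  then show "\<exists>t'. t *\<^sub>R v = t' *\<^sub>R c *\<^sub>R v \<and> 0 \<le> t'" by (intro exI[of _ "t / c"]) auto
qed

lemma ray_in_pc: "v \<in> pos_cone T \<Longrightarrow> ray v \<subseteq> pos_cone T"
  unfolding ray_def by (auto intro: pc_scale)

lemma convex_ray: "convex (ray v)"
  unfolding convex_def ray_def
proof (safe)
  fix t s u w :: real assume "0 \<le> t" "0 \<le> s" "0 \<le> u" "0 \<le> w" "u + w = 1"
  then show "\<exists>r. u *\<^sub>R t *\<^sub>R v + w *\<^sub>R s *\<^sub>R v = r *\<^sub>R v \<and> 0 \<le> r"
    by (intro exI[of _ "u * t + w * s"]) (auto simp: algebra_simps)
qed


lemma pc_span: "pos_cone X \<subseteq> span X"
proof
  fix x assume "x \<in> pos_cone X"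
  then obtain T c where T: "T \<subseteq> X" "x = (\<Sum>v\<in>T. c v *\<^sub>R v)" unfolding pos_cone_def by blast
  have "(\<Sum>v\<in>T. c v *\<^sub>R v) \<in> span X"
  proof (rule span_sum)
    fix v assume "v \<in> T" then have "v \<in> span X" using T(1) span_base by blast
    then show "c v *\<^sub>R v \<in> span X" by (rule span_scale)
  qed
  then show "x \<in> span X" using T(2) by simp
qed

context model begin

lemma g_ne: "r \<in> R \<Longrightarrow> s \<in> R \<Longrightarrow> r \<noteq> s \<Longrightarrow> g r \<noteq> g s"
  using inj by (auto dest: inj_onD)

lemma indep_pair: assumes "r \<in> R" "s \<in> R" "r \<noteq> s" shows "independent {g r, g s}"
proof -
  have ne: "g r \<noteq> g s" using inj_onD[OF inj _ assms(1,2)] assms(3) by blast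
  have "g r \<notin> span {g s}"
  proof
    assume "g r \<in> span {g s}"
    then obtain k where "g r = k *\<^sub>R g s" unfolding span_singleton by auto
    then have "cross3 (g r) (g s) = 0" by (simp add: cross_mult_left)
    then show False using nonpar assms by blast
  qed
  moreover have "independent {g s}" using nz assms by (simp add: independent_insert)
  ultimately show ?thesis using ne by (simp add: independent_insert)
qed

lemma aff_dim_pair: assumes "r \<in> R" "s \<in> R" "r \<noteq> s" shows "aff_dim (pos_cone (g`{r,s})) = 2"
proof -
  have "g`{r,s} \<subseteq> pos_cone (g`{r,s})" by (auto intro: pc_gen)
  then have "g`{r,s} \<subseteq> span (pos_cone (g`{r,s}))" using span_superset by blast
  then have "span (pos_cone (g`{r,s})) = span (g`{r,s})"
    unfolding span_eq using pc_span by blast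
  then have "dim (pos_cone (g`{r,s})) = dim {g r, g s}" using dim_same_span by simp
  also have "\<dots> = card {g r, g s}" using dim_eq_card_independent indep_pair assms by blast
  also have "\<dots> = 2" using g_ne[OF assms] by simp
  finally show ?thesis using aff_dim0[OF pc_0] by simp
qed

lemma D_lin: "det3 a b (\<Sum>u\<in>A. c u *\<^sub>R g u) = (\<Sum>u\<in>A. c u * det3 a b (g u))"
  by (simp add: det3_sum3 det3_scale3)

lemma face_if: assumes rs: "r \<in> R" "s \<in> R" "r \<noteq> s" and eps: "\<forall>v\<in>R-{r,s}. \<epsilon> * D r s v > 0"
  shows "pos_cone (g`{r,s}) face_of \<sigma>"
proof -
  define nv where "nv = (- \<epsilon>) *\<^sub>R cross3 (g r) (g s)"
  have nvx: "nv \<bullet> x = - (\<epsilon> * det3 (g r) (g s) x)" for x unfolding nv_def det3_def by simp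
  have term_nn: "0 \<le> \<epsilon> * D r s u" if "u \<in> R" for u
    using eps that D_rep(2,3)[of r s] by (cases "u = r \<or> u = s") (auto intro: less_imp_le)
  have rep: "x \<in> \<sigma> \<Longrightarrow> \<exists>c. (\<forall>u\<in>R. 0 \<le> c u) \<and> x = (\<Sum>u\<in>R. c u *\<^sub>R g u)" for x
    using pc_image[OF fin inj] by blast
  have fx: "\<epsilon> * det3 (g r) (g s) (\<Sum>u\<in>R. c u *\<^sub>R g u) = (\<Sum>u\<in>R. c u * (\<epsilon> * D r s u))" for c
    unfolding D_lin D_def by (simp add: sum_distrib_left algebra_simps)
  have le: "nv \<bullet> x \<le> 0" if xs: "x \<in> \<sigma>" for x
  proof -
    obtain c where c: "\<forall>u\<in>R. 0 \<le> c u" "x = (\<Sum>u\<in>R. c u *\<^sub>R g u)" using rep[OF xs] by blast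
    have "0 \<le> (\<Sum>u\<in>R. c u * (\<epsilon> * D r s u))" by (rule sum_nonneg) (use c(1) term_nn in auto)
    moreover have "\<epsilon> * det3 (g r) (g s) x = (\<Sum>u\<in>R. c u * (\<epsilon> * D r s u))" unfolding c(2) by (rule fx)
    ultimately show ?thesis using nvx[of x] by simp
  qed
  have fc: "(\<sigma> \<inter> {x. nv \<bullet> x = 0}) face_of \<sigma>"
    by (rule face_of_Int_supporting_hyperplane_le[OF pc_convex]) (use le in auto)
  have eq: "\<sigma> \<inter> {x. nv \<bullet> x = 0} = pos_cone (g`{r,s})"
  proof
    show "\<sigma> \<inter> {x. nv \<bullet> x = 0} \<subseteq> pos_cone (g`{r,s})"
    proof
      fix x assume x: "x \<in> \<sigma> \<inter> {x. nv \<bullet> x = 0}"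
      obtain c where c: "\<forall>u\<in>R. 0 \<le> c u" "x = (\<Sum>u\<in>R. c u *\<^sub>R g u)" using rep[of x] x by blast
      have h: "\<epsilon> * det3 (g r) (g s) x = 0" using x nvx[of x] by simp
      have "\<epsilon> * det3 (g r) (g s) x = (\<Sum>u\<in>R. c u * (\<epsilon> * D r s u))" unfolding c(2) by (rule fx)
      then have "(\<Sum>u\<in>R. c u * (\<epsilon> * D r s u)) = 0" using h by simp
      then have z: "\<forall>u\<in>R. c u * (\<epsilon> * D r s u) = 0"
        using sum_nonneg_eq_0_iff[OF fin, of "\<lambda>u. c u * (\<epsilon> * D r s u)"] c(1) term_nn by (simp add: mult_nonneg_nonneg)
      have cz: "\<forall>u\<in>R - {r,s}. c u = 0"
      proof
        fix u assume u: "u \<in> R - {r,s}"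
        have a: "c u * (\<epsilon> * D r s u) = 0" using z u by blast
        have b: "0 < \<epsilon> * D r s u" using eps u by blast
        show "c u = 0" using a b by (metis mult_eq_0_iff less_irrefl)
      qed
      have "x = (\<Sum>u\<in>{r,s}. c u *\<^sub>R g u)"
        unfolding c(2) by (rule sum.mono_neutral_right) (use fin rs cz in auto)
      also have "\<dots> \<in> pos_cone (g`{r,s})" using c(1) rs by (intro pc_comb pc_gen) auto
      finally show "x \<in> pos_cone (g`{r,s})" .
    qed
    show "pos_cone (g`{r,s}) \<subseteq> \<sigma> \<inter> {x. nv \<bullet> x = 0}"
    proof
      fix x assume x: "x \<in> pos_cone (g`{r,s})"
      have fin2: "finite {r,s}" "inj_on g {r,s}" using inj rs inj_on_subset[of g R "{r,s}"] by auto
      obtain c where c: "\<forall>u\<in>{r,s}. 0 \<le> c u" "x = (\<Sum>u\<in>{r,s}. c u *\<^sub>R g u)"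
        using pc_image[OF fin2] x by blast
      have "det3 (g r) (g s) x = 0" unfolding c(2) D_lin using rs det3_rep by simp
      moreover have "x \<in> \<sigma>" using x pc_mono[of "g`{r,s}" "g`R"] rs by auto
      ultimately show "x \<in> \<sigma> \<inter> {x. nv \<bullet> x = 0}" using nvx by simp
    qed
  qed
  show ?thesis using fc unfolding eq .
qed

end

context model begin

lemma face_only_if: assumes rs: "r \<in> R" "s \<in> R" "r \<noteq> s" and F: "pos_cone (g`{r,s}) face_of \<sigma>"
  shows "adjD r s"
proof (rule ccontr)
  assume na: "\<not> adjD r s"
  obtain v where v: "v \<in> R - {r,s}" "\<not> D r s v > 0" using na unfolding adjD_def by blast
  obtain w where w: "w \<in> R - {r,s}" "\<not> D r s w < 0" using na unfolding adjD_def by blast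
  have dv: "D r s v < 0" using v D_ne[of r s v] rs by force
  have dw: "D r s w > 0" using w D_ne[of r s w] rs by force
  have vw: "v \<noteq> w" using dv dw by auto
  define \<alpha> where "\<alpha> = D r s w"
  define \<beta> where "\<beta> = - D r s v"
  have ab: "\<alpha> > 0" "\<beta> > 0" using dv dw by (auto simp: \<alpha>_def \<beta>_def)
  define y where "y = \<alpha> *\<^sub>R g v + \<beta> *\<^sub>R g w"
  have dy: "det3 (g r) (g s) y = 0"
    unfolding y_def \<alpha>_def \<beta>_def D_def det3_def by (simp add: inner_add_right inner_diff_right mult.commute)
  define n where "n = cross3 (g r) (g s)"
  have n0: "n \<noteq> 0" using nonpar rs by (simp add: n_def)
  define K where "K = det3 (g r) (g s) n"
  have K: "K > 0" using n0 by (simp add: K_def det3_def n_def)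
  define p where "p = det3 y (g s) n"
  define q where "q = det3 (g r) y n"
  have cr: "K *\<^sub>R y = p *\<^sub>R g r + q *\<^sub>R g s"
    using cramer[of "g r" "g s" n y] dy unfolding K_def p_def q_def by simp
  have Kv: "(K * \<alpha>) *\<^sub>R g v + (K * \<beta>) *\<^sub>R g w = p *\<^sub>R g r + q *\<^sub>R g s"
    using cr unfolding y_def by (simp add: scaleR_add_right)
  have Kab: "K * \<alpha> > 0" "K * \<beta> > 0" using K ab by auto
  have vR: "v \<in> R" "v \<noteq> r" "v \<noteq> s" and wR: "w \<in> R" "w \<noteq> r" "w \<noteq> s" using v w by auto
  define z where "z = (K * \<beta>) *\<^sub>R g w"
  have zs: "z \<in> \<sigma>" unfolding z_def using Kab wR by (intro sgin) auto
  consider "p \<ge> 0" "q \<ge> 0" | "p < 0" "q \<ge> 0" | "p \<ge> 0" "q < 0" | "p < 0" "q < 0" by linarith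
  then show False
  proof cases
    case 1
    have "(K * \<alpha>) *\<^sub>R g v + z \<in> pos_cone (g`{r,s})"
      unfolding z_def Kv using 1 rs by (intro pc_add sgin) auto
    moreover have "(K * \<alpha>) *\<^sub>R g v \<in> \<sigma>" using Kab vR by (intro sgin) auto
    ultimately have "(K * \<alpha>) *\<^sub>R g v \<in> pos_cone (g`{r,s})" using face_sum[OF F _ zs] by blast
    then have h: "(1 / (K * \<alpha>)) *\<^sub>R ((K * \<alpha>) *\<^sub>R g v) \<in> pos_cone (g`{r,s})"
      using face_scale[OF F, of "(K * \<alpha>) *\<^sub>R g v" "1 / (K * \<alpha>)"] Kab by simp
    have "(1 / (K * \<alpha>)) *\<^sub>R ((K * \<alpha>) *\<^sub>R g v) = g v" using K ab by simp
    then have "g v \<in> pos_cone (g`{r,s})" using h by simp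
    then have "g v \<in> span {g r, g s}" using pc_span by auto
    then obtain a b where "g v - a *\<^sub>R g r = b *\<^sub>R g s" unfolding span_insert span_singleton by auto
    then have "g v = a *\<^sub>R g r + b *\<^sub>R g s" by (metis add.commute diff_eq_eq)
    then have "D r s v = 0" unfolding D_def by (simp add: det3_add3 det3_scale3 det3_rep)
    then show False using dv by simp
  next
    case 2
    define x where "x = (K * \<beta>) *\<^sub>R g w + (- p) *\<^sub>R g r"
    have e: "(K * \<alpha>) *\<^sub>R g v + x = q *\<^sub>R g s"
    proof -
      have "(K * \<alpha>) *\<^sub>R g v + x = ((K * \<alpha>) *\<^sub>R g v + (K * \<beta>) *\<^sub>R g w) - p *\<^sub>R g r"
        unfolding x_def by (simp add: algebra_simps)
      also have "\<dots> = q *\<^sub>R g s" unfolding Kv by simp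
      finally show ?thesis .
    qed
    show False
    proof (cases "q = 0")
      case True
      have "x \<in> \<sigma>" unfolding x_def using 2 Kab wR rs by (intro pc_add sgin) auto
      then show False using pointed_pos[OF vR(1) Kab(1)] e True by simp
    next
      case False
      then have qp: "q > 0" using 2 by simp
      have "(K * \<alpha>) *\<^sub>R g v + x \<in> pos_cone (g`(R - {s}))"
        unfolding x_def using 2 Kab wR vR rs by (intro pc_add sgin) auto
      then show False using ext_gen[OF rs(2) qp _ e[symmetric]] by blast
    qed
  next
    case 3
    define x where "x = (K * \<beta>) *\<^sub>R g w + (- q) *\<^sub>R g s"
    have e: "(K * \<alpha>) *\<^sub>R g v + x = p *\<^sub>R g r"
    proof -
      have "(K * \<alpha>) *\<^sub>R g v + x = ((K * \<alpha>) *\<^sub>R g v + (K * \<beta>) *\<^sub>R g w) - q *\<^sub>R g s"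
        unfolding x_def by (simp add: algebra_simps)
      also have "\<dots> = p *\<^sub>R g r" unfolding Kv by simp
      finally show ?thesis .
    qed
    show False
    proof (cases "p = 0")
      case True
      have "x \<in> \<sigma>" unfolding x_def using 3 Kab wR rs by (intro pc_add sgin) auto
      then show False using pointed_pos[OF vR(1) Kab(1)] e True by simp
    next
      case False
      then have pp: "p > 0" using 3 by simp
      have "(K * \<alpha>) *\<^sub>R g v + x \<in> pos_cone (g`(R - {r}))"
        unfolding x_def using 3 Kab wR vR rs by (intro pc_add sgin) auto
      then show False using ext_gen[OF rs(1) pp _ e[symmetric]] by blast
    qed
  next
    case 4
    define x where "x = (K * \<beta>) *\<^sub>R g w + ((- p) *\<^sub>R g r + (- q) *\<^sub>R g s)"
    have e: "(K * \<alpha>) *\<^sub>R g v + x = 0"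
    proof -
      have "(K * \<alpha>) *\<^sub>R g v + x = ((K * \<alpha>) *\<^sub>R g v + (K * \<beta>) *\<^sub>R g w) - (p *\<^sub>R g r + q *\<^sub>R g s)"
        unfolding x_def by (simp add: algebra_simps)
      also have "\<dots> = 0" unfolding Kv by simp
      finally show ?thesis .
    qed
    have "x \<in> \<sigma>" unfolding x_def using 4 Kab wR rs by (intro pc_add sgin) auto
    then show False using pointed_pos[OF vR(1) Kab(1) _ e] by blast
  qed
qed

lemma face_iff: assumes rs: "r \<in> R" "s \<in> R" "r \<noteq> s"
  shows "pos_cone (g`{r,s}) face_of \<sigma> \<longleftrightarrow> adjD r s"
proof
  assume "adjD r s"
  then consider "\<forall>v\<in>R-{r,s}. 1 * D r s v > 0" | "\<forall>v\<in>R-{r,s}. (-1) * D r s v > 0"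
    unfolding adjD_def by auto
  then show "pos_cone (g`{r,s}) face_of \<sigma>" using face_if[OF rs] by cases blast+
qed (rule face_only_if[OF rs])

end

lemma lattice_diff: "lattice_pt a \<Longrightarrow> lattice_pt b \<Longrightarrow> lattice_pt (a - b)"
  unfolding lattice_pt_def by (simp add: Ints_diff)

lemma lattice_scale: "lattice_pt a \<Longrightarrow> k \<in> \<int> \<Longrightarrow> lattice_pt (k *\<^sub>R a)"
  unfolding lattice_pt_def by (simp add: Ints_mult)

lemma prim_ray: assumes s: "lattice_pt s" "s \<noteq> 0"
  shows "\<exists>c>0. prim_gen (ray s) = c *\<^sub>R s"
proof -
  have "\<exists>i. s $ i \<noteq> 0" using s(2) vec_eq_iff[of s 0] by auto
  then obtain i where si: "s $ i \<noteq> 0" by blast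
  define L where "L = {t. 0 < t \<and> t \<le> 1 \<and> lattice_pt (t *\<^sub>R s)}"
  define M where "M = \<bar>s $ i\<bar>"
  have "L \<subseteq> (\<lambda>x. x / s $ i) ` {x \<in> \<int>. - M \<le> x \<and> x \<le> M}"
  proof
    fix t assume t: "t \<in> L"
    then have "(t *\<^sub>R s) $ i \<in> \<int>" unfolding L_def lattice_pt_def by blast
    then have tI: "t * s $ i \<in> \<int>" by simp
    have "\<bar>t * s $ i\<bar> \<le> M" using t unfolding L_def M_def by (simp add: abs_mult mult_left_le_one_le)
    moreover have "t = (t * s $ i) / s $ i" using si by simp
    ultimately show "t \<in> (\<lambda>x. x / s $ i) ` {x \<in> \<int>. - M \<le> x \<and> x \<le> M}" using tI by (intro image_eqI) auto
  qed
  then have fL: "finite L" using finite_int_segment finite_subset by blast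
  have L1: "1 \<in> L" unfolding L_def using s by simp
  define c where "c = Min L"
  have cL: "c \<in> L" unfolding c_def using fL L1 Min_in by blast
  have cmin: "t \<in> L \<Longrightarrow> c \<le> t" for t unfolding c_def using fL by simp
  have c0: "0 < c" "c \<le> 1" "lattice_pt (c *\<^sub>R s)" using cL unfolding L_def by auto
  define v where "v = c *\<^sub>R s"
  define PG where "PG v \<longleftrightarrow> v \<in> ray s \<and> lattice_pt v \<and> v \<noteq> 0 \<and>
      (\<forall>w\<in>ray s. lattice_pt w \<and> w \<noteq> 0 \<longrightarrow> (\<exists>k::nat. w = real k *\<^sub>R v))" for v
  have PGv: "PG v"
    unfolding PG_def
  proof (intro conjI ballI impI)
    show "v \<in> ray s" unfolding v_def ray_def using c0 by auto
    show "lattice_pt v" using c0 by (simp add: v_def)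
    show "v \<noteq> 0" using c0 s by (simp add: v_def)
    fix w assume w: "w \<in> ray s" "lattice_pt w \<and> w \<noteq> 0"
    then obtain t where t: "w = t *\<^sub>R s" "0 \<le> t" unfolding ray_def by auto
    then have tp: "t > 0" using w by (cases "t = 0") auto
    define k0 where "k0 = \<lfloor>t / c\<rfloor>"
    define r where "r = t - of_int k0 * c"
    have r0: "0 \<le> r" "r < c"
    proof -
      have "of_int k0 \<le> t / c" "t / c < of_int k0 + 1" unfolding k0_def by linarith+
      then have "of_int k0 * c \<le> t" "t < (of_int k0 + 1) * c" using c0 by (simp_all add: field_simps)
      then show "0 \<le> r" "r < c" unfolding r_def by (simp_all add: algebra_simps)
    qed
    have eq: "r *\<^sub>R s = w - of_int k0 *\<^sub>R (c *\<^sub>R s)" unfolding r_def t(1) by (simp add: scaleR_diff_left)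
    have l1: "lattice_pt (of_int k0 *\<^sub>R (c *\<^sub>R s))" using lattice_scale[OF c0(3), of "of_int k0"] by simp
    have l2: "lattice_pt (w - of_int k0 *\<^sub>R (c *\<^sub>R s))" using lattice_diff[OF _ l1] w by blast
    have rl: "lattice_pt (r *\<^sub>R s)" by (subst eq) (rule l2)
    have rz: "r = 0"
    proof (rule ccontr)
      assume "r \<noteq> 0"
      then have "r \<in> L" unfolding L_def using r0 c0 rl by auto
      then show False using cmin r0 by fastforce
    qed
    then have tk: "t = of_int k0 * c" unfolding r_def by simp
    then have "k0 > 0" using tp c0 by (simp add: zero_less_mult_iff)
    then have "real (nat k0) = of_int k0" by simp
    then show "\<exists>k::nat. w = real k *\<^sub>R v" using tk t(1) unfolding v_def
      by (intro exI[of _ "nat k0"]) simp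
  qed
  have uniq: "PG v' \<Longrightarrow> v' = v" for v'
  proof -
    assume p: "PG v'"
    obtain k1 :: nat where k1: "v = real k1 *\<^sub>R v'" using p PGv unfolding PG_def by blast
    obtain k2 :: nat where k2: "v' = real k2 *\<^sub>R v" using p PGv unfolding PG_def by blast
    have "v = real k1 *\<^sub>R (real k2 *\<^sub>R v)" unfolding k2[symmetric] by (rule k1)
    then have "v = (real k1 * real k2) *\<^sub>R v" by simp
    then have "real k1 * real k2 = 1" using PGv unfolding PG_def by (metis scaleR_cancel_right scaleR_one)
    then have "k1 = 1" by (metis of_nat_1 of_nat_eq_iff of_nat_mult nat_mult_eq_1_iff)
    then show "v' = v" using k1 by simp
  qed
  have "prim_gen (ray s) = v"
    unfolding prim_gen_def using PGv uniq unfolding PG_def by (intro the_equality) blast+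
  then show ?thesis using c0 unfolding v_def by blast
qed


locale cs =
  fixes S :: "(real^3) set" and \<sigma> :: "(real^3) set"
  assumes finS: "finite S" and latS: "\<forall>v\<in>S. lattice_pt v" and sig: "\<sigma> = pos_cone S"
    and minimal: "\<forall>s\<in>S. s \<notin> pos_cone (S - {s})" and pt: "\<sigma> \<inter> uminus ` \<sigma> = {0}"
begin

lemma pointed: assumes "x \<in> \<sigma>" "-x \<in> \<sigma>" shows "x = 0"
proof -
  have "x \<in> uminus ` \<sigma>" using assms(2) by (metis image_eqI minus_minus)
  then show ?thesis using pt assms(1) by blast
qed

lemma S_nz: "s \<in> S \<Longrightarrow> s \<noteq> 0" using minimal pc_0 by metis

lemma sub_sig: "pos_cone (S - {s}) \<subseteq> \<sigma>" unfolding sig by (rule pc_mono) auto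

lemma ray_split: assumes s: "s \<in> S" and yz: "y \<in> \<sigma>" "z \<in> \<sigma>" "y + z \<in> ray s" shows "y \<in> ray s"
proof -
  obtain t where t: "y + z = t *\<^sub>R s" "0 \<le> t" using yz(3) unfolding ray_def by auto
  obtain c1 w1 where 1: "0 \<le> c1" "w1 \<in> pos_cone (S - {s})" "y = c1 *\<^sub>R s + w1"
    using pc_split[OF finS s] yz(1) sig by blast
  obtain c2 w2 where 2: "0 \<le> c2" "w2 \<in> pos_cone (S - {s})" "z = c2 *\<^sub>R s + w2"
    using pc_split[OF finS s] yz(2) sig by blast
  have e: "(c1 + c2) *\<^sub>R s + (w1 + w2) = t *\<^sub>R s"
    using t(1) unfolding 1(3) 2(3) by (simp add: algebra_simps)
  show ?thesis
  proof (cases "c1 + c2 \<ge> t")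
    case True
    define u where "u = (c1 + c2 - t) *\<^sub>R s + w2"
    have w2s: "w2 \<in> pos_cone S" using 2(2) sub_sig sig by blast
    have "(c1 + c2 - t) *\<^sub>R s \<in> pos_cone S" using True s by (intro pc_scale pc_gen) auto
    then have us: "u \<in> \<sigma>" unfolding u_def sig using w2s by (rule pc_add)
    have "w1 + u = (c1 + c2) *\<^sub>R s + (w1 + w2) - t *\<^sub>R s" unfolding u_def by (simp add: algebra_simps)
    then have "w1 + u = 0" unfolding e by simp
    then have "- w1 = u" by (simp add: add_eq_0_iff)
    then have "w1 = 0" using pointed[of w1] us 1(2) sub_sig by auto
    then show ?thesis using 1 unfolding ray_def by auto
  next
    case False
    have "(t - (c1 + c2)) *\<^sub>R s = w1 + w2"
    proof -
      have "(t - (c1 + c2)) *\<^sub>R s = t *\<^sub>R s - (c1 + c2) *\<^sub>R s" by (simp add: scaleR_diff_left)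
      also have "\<dots> = w1 + w2" unfolding e[symmetric] by simp
      finally show ?thesis .
    qed
    then have "(1 / (t - (c1 + c2))) *\<^sub>R ((t - (c1 + c2)) *\<^sub>R s) = (1 / (t - (c1 + c2))) *\<^sub>R (w1 + w2)" by simp
    moreover have "(1 / (t - (c1 + c2))) *\<^sub>R ((t - (c1 + c2)) *\<^sub>R s) = s" using False by simp
    ultimately have "s = (1 / (t - (c1 + c2))) *\<^sub>R (w1 + w2)" by simp
    also have "\<dots> \<in> pos_cone (S - {s})" using False 1 2 by (intro pc_scale pc_add) auto
    finally show ?thesis using minimal s by blast
  qed
qed

lemma ray_mem_scale: assumes "x \<in> ray s" "0 \<le> a" shows "a *\<^sub>R x \<in> ray s"
proof -
  obtain t where t: "x = t *\<^sub>R s" "0 \<le> t" using assms(1) unfolding ray_def by auto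
  show ?thesis unfolding ray_def using t assms(2) by (intro CollectI exI[of _ "a * t"]) auto
qed

lemma ray_face: assumes s: "s \<in> S" shows "ray s face_of \<sigma>"
  unfolding face_of_def
proof (intro conjI ballI impI)
  show "ray s \<subseteq> \<sigma>" unfolding sig using s by (intro ray_in_pc pc_gen)
  show "convex (ray s)" by (rule convex_ray)
  fix a b x assume ab: "a \<in> \<sigma>" "b \<in> \<sigma>" and x: "x \<in> ray s" "x \<in> open_segment a b"
  then obtain u where u: "0 < u" "u < 1" "x = (1 - u) *\<^sub>R a + u *\<^sub>R b" unfolding in_segment by blast
  have ya: "(1 - u) *\<^sub>R a \<in> \<sigma>" "u *\<^sub>R b \<in> \<sigma>" using ab u unfolding sig by (auto intro: pc_scale)
  have xr: "(1 - u) *\<^sub>R a + u *\<^sub>R b \<in> ray s" using x u by simp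
  have ha: "(1 - u) *\<^sub>R a \<in> ray s" using ray_split[OF s ya xr] .
  have h: "(1 / (1 - u)) *\<^sub>R ((1 - u) *\<^sub>R a) \<in> ray s" by (rule ray_mem_scale[OF ha]) (use u in simp)
  have e: "(1 / (1 - u)) *\<^sub>R ((1 - u) *\<^sub>R a) = a" using u by simp
  show "a \<in> ray s" using h unfolding e .
  have xr': "u *\<^sub>R b + (1 - u) *\<^sub>R a \<in> ray s" using xr by (simp add: add.commute)
  have hb: "u *\<^sub>R b \<in> ray s" using ray_split[OF s ya(2) ya(1) xr'] .
  have h: "(1 / u) *\<^sub>R (u *\<^sub>R b) \<in> ray s" by (rule ray_mem_scale[OF hb]) (use u in simp)
  have e: "(1 / u) *\<^sub>R (u *\<^sub>R b) = b" using u by simp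
  show "b \<in> ray s" using h unfolding e .
qed

lemma ray_in_rays: "s \<in> S \<Longrightarrow> ray s \<in> rays \<sigma>"
  unfolding rays_def using ray_face aff_dim_ray S_nz by auto

lemma rays_char: assumes r: "\<rho> \<in> rays \<sigma>" shows "\<exists>s\<in>S. \<rho> = ray s"
proof -
  have F: "\<rho> face_of pos_cone S" and ad: "aff_dim \<rho> = 1" using r sig unfolding rays_def by auto
  have "\<rho> \<noteq> {}" using ad by auto
  have "\<exists>x\<in>\<rho>. x \<noteq> 0"
  proof (rule ccontr)
    assume "\<not> ?thesis"
    then have "\<rho> = {0}" using \<open>\<rho> \<noteq> {}\<close> by auto
    then show False using ad by simp
  qed
  then obtain x where x: "x \<in> \<rho>" "x \<noteq> 0" by blast
  have xs: "x \<in> pos_cone S" using F x face_of_imp_subset by blast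
  obtain c where c: "\<forall>v\<in>S. 0 \<le> c v" "x = (\<Sum>v\<in>S. c v *\<^sub>R v)" using xs pc_fin[OF finS] by blast
  have "\<exists>v\<in>S. c v \<noteq> 0"
  proof (rule ccontr)
    assume "\<not> ?thesis"
    then have "x = 0" using c(2) by simp
    then show False using x by simp
  qed
  then obtain v where v: "v \<in> S" "c v > 0" using c(1) by (metis less_eq_real_def)
  have "x = c v *\<^sub>R v + (\<Sum>u\<in>S-{v}. c u *\<^sub>R u)" using c(2) sum.remove[OF finS v(1)] by simp
  moreover have "(\<Sum>u\<in>S-{v}. c u *\<^sub>R u) \<in> pos_cone S" using c(1) finS by (intro pc_comb pc_gen) auto
  moreover have "c v *\<^sub>R v \<in> pos_cone S" using v by (intro pc_scale pc_gen) auto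
  ultimately have "c v *\<^sub>R v \<in> \<rho>" using face_sum[OF F] x(1) by metis
  then have h: "(1 / c v) *\<^sub>R (c v *\<^sub>R v) \<in> \<rho>" by (rule face_scale[OF F]) (use v in simp)
  have e: "(1 / c v) *\<^sub>R (c v *\<^sub>R v) = v" using v by simp
  have vr: "v \<in> \<rho>" using h unfolding e .
  have sub: "ray v \<subseteq> \<rho>" unfolding ray_def using face_scale[OF F vr] by auto
  have "\<rho> \<subseteq> ray v"
  proof
    fix w assume w: "w \<in> \<rho>"
    show "w \<in> ray v"
    proof (cases "w \<in> span {v}")
      case True
      then obtain k where k: "w = k *\<^sub>R v" unfolding span_singleton by auto
      show ?thesis
      proof (cases "k \<ge> 0")
        case True then show ?thesis using k unfolding ray_def by auto
      next
        case False
        have ws: "w \<in> \<sigma>" using w F face_of_imp_subset sig by blast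
        have "-w = (-k) *\<^sub>R v" using k by simp
        also have "\<dots> \<in> \<sigma>" using False v unfolding sig by (intro pc_scale pc_gen) auto
        finally have "w = 0" using pointed ws by blast
        then show ?thesis using ray_0 by simp
      qed
    next
      case False
      have vn: "v \<noteq> 0" using S_nz v by auto
      have ind: "independent {w, v}" using False vn
        by (simp add: independent_insert span_base)
      have "w \<noteq> v" using False span_base by blast
      have "{0, v, w} \<subseteq> \<rho>" using sub ray_0 vr w by auto
      then have le: "aff_dim {0, v, w} \<le> 1" using aff_dim_subset ad by metis
      have "aff_dim {0, v, w} = int (dim {0, v, w})" by (rule aff_dim0) simp
      also have "dim {0, v, w} = dim {w, v}" by (rule dim_same_span) (simp add: insert_commute)
      also have "\<dots> = card {w, v}" using dim_eq_card_independent ind by blast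
      also have "\<dots> = 2" using \<open>w \<noteq> v\<close> by simp
      finally show ?thesis using le by simp
    qed
  qed
  then show ?thesis using sub v by blast
qed

end

context cs begin

lemma pg: assumes r: "\<rho> \<in> rays \<sigma>" shows "\<exists>s\<in>S. \<exists>c>0. \<rho> = ray s \<and> prim_gen \<rho> = c *\<^sub>R s"
proof -
  obtain s where s: "s \<in> S" "\<rho> = ray s" using rays_char[OF r] by blast
  obtain c where "c > 0" "prim_gen (ray s) = c *\<^sub>R s" using prim_ray[of s] latS s S_nz by blast
  then show ?thesis using s by blast
qed

lemma g_ray: assumes r: "\<rho> \<in> rays \<sigma>" shows "ray (prim_gen \<rho>) = \<rho>" "prim_gen \<rho> \<noteq> 0" "prim_gen \<rho> \<in> \<rho>"
proof -
  obtain s c where s: "s \<in> S" "c > 0" "\<rho> = ray s" "prim_gen \<rho> = c *\<^sub>R s" using pg[OF r] by blast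
  show "ray (prim_gen \<rho>) = \<rho>" using s ray_scale by simp
  show "prim_gen \<rho> \<noteq> 0" using s S_nz by simp
  then show "prim_gen \<rho> \<in> \<rho>" using ray_self \<open>ray (prim_gen \<rho>) = \<rho>\<close> by metis
qed

lemma rays_sub: "rays \<sigma> \<subseteq> ray ` S" using rays_char by blast

lemma fin_rays: "finite (rays \<sigma>)" using rays_sub finS finite_surj by blast

lemma inj_g: "inj_on prim_gen (rays \<sigma>)"
  by (rule inj_onI) (metis g_ray(1))

lemma rays_sub_sig: "\<rho> \<in> rays \<sigma> \<Longrightarrow> \<rho> \<subseteq> \<sigma>" unfolding rays_def using face_of_imp_subset by blast

lemma g_in_sig: "\<rho> \<in> rays \<sigma> \<Longrightarrow> prim_gen \<rho> \<in> \<sigma>" using g_ray(3) rays_sub_sig by blast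

lemma sig_eq: "\<sigma> = pos_cone (prim_gen ` rays \<sigma>)"
proof
  have "S \<subseteq> pos_cone (prim_gen ` rays \<sigma>)"
  proof
    fix s assume s: "s \<in> S"
    then have r: "ray s \<in> rays \<sigma>" by (rule ray_in_rays)
    obtain s' c where s': "s' \<in> S" "c > 0" "ray s = ray s'" "prim_gen (ray s) = c *\<^sub>R s'" using pg[OF r] by blast
    have "s \<in> ray s'" using s'(3) ray_self by metis
    then obtain t where t: "s = t *\<^sub>R s'" "0 \<le> t" unfolding ray_def by auto
    have eqs: "s = (t / c) *\<^sub>R prim_gen (ray s)" using s' t by simp
    have "prim_gen (ray s) \<in> prim_gen ` rays \<sigma>" using r by blast
    then have "(t / c) *\<^sub>R prim_gen (ray s) \<in> pos_cone (prim_gen ` rays \<sigma>)"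
      by (rule pc_scale[OF pc_gen]) (use t s' in simp)
    then show "s \<in> pos_cone (prim_gen ` rays \<sigma>)" using eqs by simp
  qed
  then show "\<sigma> \<subseteq> pos_cone (prim_gen ` rays \<sigma>)" unfolding sig by (rule pc_sub)
  have "prim_gen ` rays \<sigma> \<subseteq> pos_cone S" using g_in_sig sig by auto
  then show "pos_cone (prim_gen ` rays \<sigma>) \<subseteq> \<sigma>" unfolding sig by (rule pc_sub)
qed

lemma extremal_g: assumes r: "\<rho> \<in> rays \<sigma>" shows "prim_gen \<rho> \<notin> pos_cone (prim_gen ` (rays \<sigma> - {\<rho>}))"
proof
  assume a: "prim_gen \<rho> \<in> pos_cone (prim_gen ` (rays \<sigma> - {\<rho>}))"
  define R' where "R' = rays \<sigma> - {\<rho>}"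
  have fR: "finite R'" "inj_on prim_gen R'" unfolding R'_def using fin_rays inj_g inj_on_subset[of prim_gen "rays \<sigma>"] by auto
  obtain c where c: "\<forall>u\<in>R'. 0 \<le> c u" "prim_gen \<rho> = (\<Sum>u\<in>R'. c u *\<^sub>R prim_gen u)"
    using a pc_image[OF fR] unfolding R'_def by blast
  have "\<exists>u\<in>R'. c u \<noteq> 0"
  proof (rule ccontr)
    assume "\<not> ?thesis"
    then have "(\<Sum>u\<in>R'. c u *\<^sub>R prim_gen u) = 0" by simp
    then show False using c(2) g_ray(2)[OF r] by simp
  qed
  then obtain u where u: "u \<in> R'" "c u > 0" using c(1) by (metis less_eq_real_def)
  have uR: "u \<in> rays \<sigma>" "u \<noteq> \<rho>" using u unfolding R'_def by auto
  have sp: "prim_gen \<rho> = c u *\<^sub>R prim_gen u + (\<Sum>v\<in>R'-{u}. c v *\<^sub>R prim_gen v)"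
    using c(2) sum.remove[OF fR(1) u(1)] by simp
  have F: "\<rho> face_of pos_cone S" using r sig unfolding rays_def by auto
  have m1: "c u *\<^sub>R prim_gen u \<in> pos_cone S" using u uR g_in_sig sig by (intro pc_scale) auto
  have m2: "(\<Sum>v\<in>R'-{u}. c v *\<^sub>R prim_gen v) \<in> pos_cone S"
    using c(1) fR(1) g_in_sig sig unfolding R'_def by (intro pc_comb) auto
  have "c u *\<^sub>R prim_gen u \<in> \<rho>" using face_sum[OF F m1 m2] sp g_ray(3)[OF r] by metis
  then have h: "(1 / c u) *\<^sub>R (c u *\<^sub>R prim_gen u) \<in> \<rho>" by (rule face_scale[OF F]) (use u in simp)
  have e: "(1 / c u) *\<^sub>R (c u *\<^sub>R prim_gen u) = prim_gen u" using u by simp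
  have "prim_gen u \<in> ray (prim_gen \<rho>)" using h unfolding e g_ray(1)[OF r] .
  then obtain t where t: "prim_gen u = t *\<^sub>R prim_gen \<rho>" "0 \<le> t" unfolding ray_def by auto
  have "t \<noteq> 0" using t g_ray(2)[OF uR(1)] by auto
  then have "ray (prim_gen u) = ray (prim_gen \<rho>)" using t ray_scale by simp
  then show False using g_ray(1) r uR by metis
qed

lemma model_g: "model (rays \<sigma>) prim_gen"
proof
  show "finite (rays \<sigma>)" by (rule fin_rays)
  show "inj_on prim_gen (rays \<sigma>)" by (rule inj_g)
  show "\<And>r. r \<in> rays \<sigma> \<Longrightarrow> prim_gen r \<noteq> 0" using g_ray(2) by blast
  show "\<And>x. x \<in> pos_cone (prim_gen ` rays \<sigma>) \<Longrightarrow> - x \<in> pos_cone (prim_gen ` rays \<sigma>) \<Longrightarrow> x = 0"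
    using pointed sig_eq by simp
  show "\<And>r. r \<in> rays \<sigma> \<Longrightarrow> prim_gen r \<notin> pos_cone (prim_gen ` (rays \<sigma> - {r}))" by (rule extremal_g)
qed

end

lemma get_cs: assumes "full_sc_rat_poly_cone \<sigma>" shows "\<exists>S. cs S \<sigma>"
proof -
  obtain S0 where S0: "finite S0" "\<forall>v\<in>S0. lattice_pt v" "\<sigma> = pos_cone S0"
    and pt: "\<sigma> \<inter> uminus ` \<sigma> = {0}"
    using assms unfolding full_sc_rat_poly_cone_def by blast
  define Q where "Q T \<longleftrightarrow> T \<subseteq> S0 \<and> pos_cone T = \<sigma>" for T
  have "Q S0" using S0 by (simp add: Q_def)
  then obtain T where T: "Q T" and Tmin: "\<forall>T'. Q T' \<longrightarrow> card T \<le> card T'"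
    using ex_has_least_nat[of Q S0 card] by blast
  have fT: "finite T" using T S0(1) finite_subset unfolding Q_def by blast
  have "cs T \<sigma>"
  proof
    show "finite T" by (rule fT)
    show "\<forall>v\<in>T. lattice_pt v" using T S0(2) unfolding Q_def by blast
    show "\<sigma> = pos_cone T" using T unfolding Q_def by simp
    show "\<sigma> \<inter> uminus ` \<sigma> = {0}" by (rule pt)
    show "\<forall>s\<in>T. s \<notin> pos_cone (T - {s})"
    proof (intro ballI notI)
      fix s assume s: "s \<in> T" "s \<in> pos_cone (T - {s})"
      then have "pos_cone (T - {s}) = \<sigma>" using pc_remove[of s T] T unfolding Q_def by simp
      then have "Q (T - {s})" using T unfolding Q_def by auto
      then have "card T \<le> card (T - {s})" using Tmin by blast
      moreover have "card (T - {s}) < card T" using fT s(1) by (rule card_Diff1_less)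
      ultimately show False by simp
    qed
  qed
  then show ?thesis by blast
qed

lemma pc_rays: "pos_cone (ray a \<union> ray b) = pos_cone {a, b}"
proof
  have "a \<in> pos_cone {a,b}" "b \<in> pos_cone {a,b}" by (auto intro: pc_gen)
  then have "ray a \<union> ray b \<subseteq> pos_cone {a, b}" using ray_in_pc by blast
  then show "pos_cone (ray a \<union> ray b) \<subseteq> pos_cone {a, b}" by (rule pc_sub)
  show "pos_cone {a, b} \<subseteq> pos_cone (ray a \<union> ray b)" using ray_self by (intro pc_mono) auto
qed

theorem mainTheorem9:
  fixes \<sigma> :: "(real^3) set" and P :: "(real^3) set set"
  assumes "full_sc_rat_poly_cone \<sigma>"
    and "P \<subseteq> rays \<sigma>"
  shows "(sigma1 \<sigma> P \<inter> sigma2 \<sigma> P \<noteq> {0} \<longleftrightarrow> more_than_one_interval \<sigma> P)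
       \<and> (more_than_one_interval \<sigma> P \<longrightarrow> sigmaPi \<sigma> P = UNIV)"
proof -
  obtain S where csS: "cs S \<sigma>" using get_cs[OF assms(1)] by blast
  have M: "model (rays \<sigma>) prim_gen" using cs.model_g[OF csS] .
  have sig: "\<sigma> = pos_cone (prim_gen ` rays \<sigma>)" using cs.sig_eq[OF csS] .
  have adj_eq: "adjacent_rays \<sigma> x y \<longleftrightarrow> model.adj (rays \<sigma>) prim_gen x y"
    if xy: "x \<in> rays \<sigma>" "y \<in> rays \<sigma>" for x y
  proof (cases "x = y")
    case True then show ?thesis unfolding adjacent_rays_def model.adj_def[OF M] by simp
  next
    case False
    have pc: "pos_cone (x \<union> y) = pos_cone (prim_gen ` {x, y})"
      using pc_rays[of "prim_gen x" "prim_gen y"] cs.g_ray(1)[OF csS xy(1)] cs.g_ray(1)[OF csS xy(2)] by simp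
    have "pos_cone (x \<union> y) face_of \<sigma> \<longleftrightarrow> model.adjD (rays \<sigma>) prim_gen x y"
      unfolding pc using model.face_iff[OF M xy False] sig by simp
    moreover have "aff_dim (pos_cone (x \<union> y)) = 2" unfolding pc using model.aff_dim_pair[OF M xy False] .
    ultimately show ?thesis unfolding adjacent_rays_def model.adj_def[OF M] using xy False by blast
  qed
  have rel_eq: "{(x, y). x \<in> P \<and> y \<in> P \<and> adjacent_rays \<sigma> x y} = model.rel (rays \<sigma>) prim_gen P"
    unfolding model.rel_def[OF M] using adj_eq assms(2) by blast
  have mto: "more_than_one_interval \<sigma> P \<longleftrightarrow> model.mto (rays \<sigma>) prim_gen P"
    unfolding more_than_one_interval_def model.mto_def[OF M] rel_eq ..
  show ?thesis
    unfolding mto sigma1_def sigma2_def sigmaPi_def using model.main[OF M assms(2)] .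
qed


end
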